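(* For every $j\in\tfrac12\mathbb{N}^+$, \[ K^{(j+\frac12)}(t)=\mathcal{F}^{(j+\frac12)}\star K^{(\frac12)}_{1}(q^{j}t)\star\widehat R^{(\frac12,j)}\star K^{(j)}_{2}(q^{-1/2}t)\star\mathcal{E}^{(j+\frac12)}, \] where $K^{(\frac12)}_1(q^jt)=K^{(\frac12)}(q^jt)\otimes I_{2j+1}$ and $K^{(j)}_2(q^{-1/2}t)=I_2\otimes K^{(j)}(q^{-1/2}t)$.
   Context: $\mathbb{F}$ is a field of characteristic zero in which every element has a square root; $q\in\mathbb{F}$ nonzero, not a root of unity, with fixed square root $q^{1/2}$ ($q^{k/2}:=(q^{1/2})^k$); other $(\cdot)^{1/2}$ denote fixed square roots in $\mathbb{F}$. $[n]_q=\frac{q^n-q^{-n}}{q-q^{-1}}$, $[n]_q^!=[n]_q\cdots[1]_q$, $[0]_q^!=1$. $\tfrac12\mathbb{N}^+=\{\tfrac12,1,\tfrac32,\dots\}$. $I_n$ identity, $\otimes$ Kronecker product, $t$ an indeterminate. For $j\in\tfrac12\mathbb{N}^+$: $\mathcal{E}^{(j+\frac12)}$ is the $(4j+2)\times(2j+2)$ matrix with only nonzero entries $\mathcal{E}_{(a,a)}=\big(\frac{[2j+2-a]_q}{[2j+1]_q}\big)^{1/2}$, $\mathcal{E}_{(a+2j+1,a+1)}=\big(\frac{[a]_q}{[2j+1]_q}\big)^{1/2}$ ($1\le a\le 2j+1$); $\mathcal{F}^{(j+\frac12)}$ is the $(2j+2)\times(4j+2)$ matrix with only nonzero entries $\mathcal{F}_{(a,a)}=\frac{([2j+2-a]_q[2j+1]_q)^{1/2}}{[2j+2-a]_q+[a-1]_q}$,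 $\mathcal{F}_{(a+1,a+2j+1)}=\frac{([a]_q[2j+1]_q)^{1/2}}{[2j+1-a]_q+[a]_q}$ ($1\le a\le 2j+1$). $\widehat R^{(\frac12,j)}=q^{2\,\mathrm{diag}(\frac12,-\frac12)\otimes\mathrm{diag}(j,j-1,\dots,-j)}$ (diagonal). $\mathbb{V}$ is the free algebra on letters $x,y$ (basis: words; $\mathbf 1$ empty word) with $q$-shuffle product $\star$: bilinear, $\mathbf 1\star v=v\star\mathbf 1=v$, and for nonempty words $u=u_1\cdots u_r,v=v_1\cdots v_s$, $u\star v=u_1((u_2\cdots u_r)\star v)+v_1(u\star(v_2\cdots v_s))q^{\langle v_1,u_1\rangle+\dots+\langle v_1,u_r\rangle}$ with $\langle x,x\rangle=\langle y,y\rangle=2$, $\langle x,y\rangle=\langle y,x\rangle=-2$. For matrices with entries in $\mathbb{V}$ or series over $\mathbb{V}$ (scalars from $\mathbb{F}$ regarded as multiples of $\mathbf 1$), $A\star B$ is the matrix product with entries multiplied by $\star$. $\bar x=1,\bar y=-1$; a word $a_1\cdots a_n$ is Catalan if $\bar a_1+\dots+\bar a_i\ge0$ ($i<n$) and total $0$; $\mathrm{Cat}_n$ = Catalan words of length $2n$. $\Delta^{(m)}_n=\sum_{a_1\cdots a_{2n}\in\mathrm{Cat}_n}\prod_{i=1}^{2n}[\bar a_1+\dots+\bar a_{i-1}+m(\bar a_i+1)/2]_q\,a_1\cdots a_{2n}$, $\Delta^{(m)}(t)=\sum_n\Delta^{(m)}_nt^n$. Deletion: $x^{-1}w$ deletes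 a leading $x$ (else $0$; $x^{-1}\mathbf 1=0$), $y^{-1}w$, $wx^{-1}$, $wy^{-1}$ analogously; extended linearly/coefficientwise; exponent $-k$ is $k$-fold application, $0$ identity. $K^{(j)}(t)$ is the $(2j+1)\times(2j+1)$ matrix with $K^{(j)}_{(a,b)}(t)=\varphi(a,b,j)t^{a-b-2j}x^{1-b}\Delta^{(-2j)}(-t^2)y^{a-2j-1}$, $\varphi(a,b,j)=q^{\rho(a,b,j)}([2j]_q^!)^{-1}\big(\frac{[a-1]_q^![2j+1-b]_q^!}{[b-1]_q^![2j+1-a]_q^!}\big)^{1/2}$, $\rho(a,b,j)=(a^2+b^2+6j^2+4ab-6aj-6bj-6a-6b+13j+6)/2$. *)

theory Defs
  imports Complex_Main
begin

datatype letter = Lx | Ly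

(* An element of V is given by its coefficient function on words.  We allow
   arbitrary coefficient functions (formal series over words); the q-shuffle
   product is still well defined coefficientwise (only finitely many pairs of
   words contribute to a given word), and it restricts to the product of V on
   finitely supported functions. *)
type_synonym 'a vv = "letter list \<Rightarrow> 'a"

definition pairing :: "letter \<Rightarrow> letter \<Rightarrow> int" where
  "pairing a b = (if a = b then 2 else -2)"

(* shw q u v = u star v for words u v, as a coefficient function *)
fun shw :: "'a::field \<Rightarrow> letter list \<Rightarrow> letter list \<Rightarrow> 'a vv" where
  "shw q [] v = (\<lambda>w. if w = v then 1 else 0)"
| "shw q (a # u) [] = (\<lambda>w. if w = a # u then 1 else 0)"
| "shw q (a # u) (b # v) = (\<lambda>w. case w of [] \<Rightarrow> 0
     | c # w' \<Rightarrow> (if c = a then shw q u (b # v) w' else 0)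
                 + (if c = b then q powi (\<Sum>l\<leftarrow>a # u. pairing b l) * shw q (a # u) v w' else 0))"

definition vstar :: "'a::field \<Rightarrow> 'a vv \<Rightarrow> 'a vv \<Rightarrow> 'a vv" where
  "vstar q f g = (\<lambda>w. \<Sum>p\<in>{(u, v). length u + length v = length w}.
      f (fst p) * g (snd p) * shw q (fst p) (snd p) w)"

(* coefficient of t^k *)
type_synonym 'a ls = "int \<Rightarrow> 'a vv"

(* product of Laurent series (Cauchy product with star); the index set is finite
   whenever both supports are bounded below, which is the case for all series below *)
definition lsmul :: "'a::field \<Rightarrow> 'a ls \<Rightarrow> 'a ls \<Rightarrow> 'a ls" where
  "lsmul q f g = (\<lambda>k w. \<Sum>i\<in>{i. f i \<noteq> (\<lambda>_. 0) \<and> g (k - i) \<noteq> (\<lambda>_. 0)}.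
      vstar q (f i) (g (k - i)) w)"

definition lsconst :: "'a::field \<Rightarrow> 'a ls" where
  "lsconst c = (\<lambda>k w. if k = 0 \<and> w = [] then c else 0)"

definition lsscale :: "'a::field \<Rightarrow> 'a ls \<Rightarrow> 'a ls" where
  "lsscale c f = (\<lambda>k w. c * f k w)"

definition tshift :: "int \<Rightarrow> 'a::field ls \<Rightarrow> 'a ls" where
  "tshift d f = (\<lambda>k. f (k - d))"

definition tsubst_scale :: "'a::field \<Rightarrow> 'a ls \<Rightarrow> 'a ls" where
  "tsubst_scale c f = (\<lambda>k w. c powi k * f k w)"

(* f(t) to f(-t^2) *)
definition tsubst_negsq :: "'a::field ls \<Rightarrow> 'a ls" where
  "tsubst_negsq f = (\<lambda>k w. if even k then (-1) powi (k div 2) * f (k div 2) w else 0)"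

(* deletions: x^{-1} f  and  f y^{-1}, coefficientwise *)
definition del_x_left :: "'a::field ls \<Rightarrow> 'a ls" where
  "del_x_left f = (\<lambda>k w. f k (Lx # w))"

definition del_y_right :: "'a::field ls \<Rightarrow> 'a ls" where
  "del_y_right f = (\<lambda>k w. f k (w @ [Ly]))"

(* matrices are functions on 1-based indices; dimensions are passed explicitly *)
type_synonym 'a lsmat = "nat \<Rightarrow> nat \<Rightarrow> 'a ls"

definition mmul :: "'a::field \<Rightarrow> nat \<Rightarrow> 'a lsmat \<Rightarrow> 'a lsmat \<Rightarrow> 'a lsmat" where
  "mmul q n A B = (\<lambda>i k d w. \<Sum>l\<in>{1..n}. lsmul q (A i l) (B l k) d w)"

definition idm :: "'a::field lsmat" where
  "idm = (\<lambda>i k. if i = k then lsconst 1 else (\<lambda>_ _. 0))"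

(* Kronecker product A (x) B where B has size rb x cb *)
definition kron :: "'a::field \<Rightarrow> nat \<Rightarrow> nat \<Rightarrow> 'a lsmat \<Rightarrow> 'a lsmat \<Rightarrow> 'a lsmat" where
  "kron q rb cb A B = (\<lambda>i k. lsmul q (A ((i - 1) div rb + 1) ((k - 1) div cb + 1))
                                    (B ((i - 1) mod rb + 1) ((k - 1) mod cb + 1)))"

definition constmat :: "(nat \<Rightarrow> nat \<Rightarrow> 'a::field) \<Rightarrow> 'a lsmat" where
  "constmat M = (\<lambda>i k. lsconst (M i k))"

definition qint :: "'a::field \<Rightarrow> int \<Rightarrow> 'a" where
  "qint q n = (q powi n - q powi (-n)) / (q - inverse q)"

definition qfact :: "'a::field \<Rightarrow> nat \<Rightarrow> 'a" where
  "qfact q n = (\<Prod>k\<in>{1..n}. qint q (int k))"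

(* ([n]_q^!)^{1/2} := [1]_q^{1/2} ... [n]_q^{1/2} with the fixed square roots sr *)
definition sqfact :: "('a::field \<Rightarrow> 'a) \<Rightarrow> 'a \<Rightarrow> nat \<Rightarrow> 'a" where
  "sqfact sr q n = (\<Prod>k\<in>{1..n}. sr (qint q (int k)))"

(* q^r for r in (1/2)Z, where h = q^{1/2}:  q^{k/2} = h^k *)
definition qpow :: "'a::field \<Rightarrow> rat \<Rightarrow> 'a" where
  "qpow h r = h powi \<lfloor>2 * r\<rfloor>"

definition bar :: "letter \<Rightarrow> int" where
  "bar l = (if l = Lx then 1 else -1)"

definition catalan :: "letter list \<Rightarrow> bool" where
  "catalan w \<longleftrightarrow> (\<forall>i\<le>length w. 0 \<le> sum_list (map bar (take i w)))
                  \<and> sum_list (map bar w) = 0"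

definition Delta_n :: "'a::field \<Rightarrow> int \<Rightarrow> nat \<Rightarrow> 'a vv" where
  "Delta_n q m n = (\<lambda>w. if length w = 2 * n \<and> catalan w
      then (\<Prod>i<2 * n. qint q (sum_list (map bar (take i w)) + m * (bar (w ! i) + 1) div 2))
      else 0)"

definition DeltaS :: "'a::field \<Rightarrow> int \<Rightarrow> 'a ls" where
  "DeltaS q m = (\<lambda>k w. if 0 \<le> k then Delta_n q m (nat k) w else 0)"

section \<open>The matrices K^{(j)}, E, F, R; throughout m = 2j\<close>

definition rho :: "nat \<Rightarrow> nat \<Rightarrow> rat \<Rightarrow> rat" where
  "rho a b j = (of_nat a ^ 2 + of_nat b ^ 2 + 6 * j ^ 2 + 4 * of_nat a * of_nat b
                - 6 * of_nat a * j - 6 * of_nat b * j - 6 * of_nat a - 6 * of_nat b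
                + 13 * j + 6) / 2"

definition phi :: "('a::field \<Rightarrow> 'a) \<Rightarrow> 'a \<Rightarrow> 'a \<Rightarrow> nat \<Rightarrow> nat \<Rightarrow> nat \<Rightarrow> 'a" where
  "phi sr q h a b m = qpow h (rho a b (of_nat m / 2)) * inverse (qfact q m)
     * ((sqfact sr q (a - 1) * sqfact sr q (m + 1 - b))
        / (sqfact sr q (b - 1) * sqfact sr q (m + 1 - a)))"

(* K^{(j)}(t), j = m/2, a (m+1) x (m+1) matrix *)
definition Kmat :: "('a::field \<Rightarrow> 'a) \<Rightarrow> 'a \<Rightarrow> 'a \<Rightarrow> nat \<Rightarrow> 'a lsmat" where
  "Kmat sr q h m = (\<lambda>a b. lsscale (phi sr q h a b m)
      (tshift (int a - int b - int m)
        ((del_x_left ^^ (b - 1)) ((del_y_right ^^ (m + 1 - a))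
           (tsubst_negsq (DeltaS q (- int m)))))))"

(* E^{(j+1/2)}, a (2m+2) x (m+2) matrix *)
definition Emat :: "('a::field \<Rightarrow> 'a) \<Rightarrow> 'a \<Rightarrow> nat \<Rightarrow> nat \<Rightarrow> nat \<Rightarrow> 'a" where
  "Emat sr q m = (\<lambda>r c.
     if 1 \<le> r \<and> r \<le> m + 1 \<and> c = r
       then sr (qint q (int m + 2 - int r)) / sr (qint q (int m + 1))
     else if m + 2 \<le> r \<and> r \<le> 2 * m + 2 \<and> c = r - m
       then sr (qint q (int r - int m - 1)) / sr (qint q (int m + 1))
     else 0)"

(* F^{(j+1/2)}, a (m+2) x (2m+2) matrix *)
definition Fmat :: "('a::field \<Rightarrow> 'a) \<Rightarrow> 'a \<Rightarrow> nat \<Rightarrow> nat \<Rightarrow> nat \<Rightarrow> 'a" where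
  "Fmat sr q m = (\<lambda>r c.
     if 1 \<le> c \<and> c \<le> m + 1 \<and> r = c
       then sr (qint q (int m + 2 - int c)) * sr (qint q (int m + 1))
            / (qint q (int m + 2 - int c) + qint q (int c - 1))
     else if m + 2 \<le> c \<and> c \<le> 2 * m + 2 \<and> r = c - m
       then (let a = c - m - 1 in
             sr (qint q (int a)) * sr (qint q (int m + 1))
             / (qint q (int m + 1 - int a) + qint q (int a)))
     else 0)"

(* Rhat^{(1/2,j)} = q^{2 D}, D = diag(1/2,-1/2) (x) diag(j, j-1, ..., -j) *)
definition Dmat :: "nat \<Rightarrow> nat \<Rightarrow> rat" where
  "Dmat m r = (if r \<le> m + 1 then 1/2 else -1/2) * (of_nat m / 2 - of_nat ((r - 1) mod (m + 1)))"

definition Rmat :: "'a::field \<Rightarrow> nat \<Rightarrow> nat \<Rightarrow> nat \<Rightarrow> 'a" where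
  "Rmat h m = (\<lambda>r c. if r = c \<and> 1 \<le> r \<and> r \<le> 2 * m + 2 then qpow h (2 * Dmat m r) else 0)"

end

theory Submission
  imports Defs
begin

lemma letter_UNIV: "(UNIV :: letter set) = {Lx, Ly}"
  using letter.exhaust by auto

lemma finite_letter: "finite (UNIV :: letter set)"
  by (simp add: letter_UNIV)

definition PP :: "nat \<Rightarrow> (letter list \<times> letter list) set" where
  "PP n = {(u, v). length u + length v = n}"

lemma finite_PP: "finite (PP n)"
proof -
  have "PP n \<subseteq> {xs. set xs \<subseteq> UNIV \<and> length xs \<le> n} \<times> {xs. set xs \<subseteq> UNIV \<and> length xs \<le> n}"
    by (auto simp: PP_def)
  moreover have "finite ({xs. set xs \<subseteq> (UNIV::letter set) \<and> length xs \<le> n} \<times> {xs. set xs \<subseteq> (UNIV::letter set) \<and> length xs \<le> n})"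
    using finite_lists_length_le[OF finite_letter] by blast
  ultimately show ?thesis by (rule finite_subset)
qed

lemma vstar_PP: "vstar q f g w = (\<Sum>p\<in>PP (length w). f (fst p) * g (snd p) * shw q (fst p) (snd p) w)"
  by (simp add: vstar_def PP_def)

lemma shw_right_nil[simp]: "shw q u [] w = (if w = u then 1 else 0)"
  by (cases u) auto

lemma shw_cons: "shw q u v (c # w) =
   (case u of [] \<Rightarrow> 0 | a # u' \<Rightarrow> if a = c then shw q u' v w else 0)
 + (case v of [] \<Rightarrow> 0 | b # v' \<Rightarrow> if b = c then q powi (\<Sum>l\<leftarrow>u. pairing c l) * shw q u v' w else 0)"
  by (cases u; cases v) auto

lemma shw_nil: "shw q u v [] = (if u = [] \<and> v = [] then 1 else 0)"
  by (cases u; cases v) auto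

fun vsr :: "'a::field \<Rightarrow> 'a vv \<Rightarrow> 'a vv \<Rightarrow> letter list \<Rightarrow> 'a" where
  "vsr q f g [] = f [] * g []"
| "vsr q f g (c # w) = vsr q (\<lambda>u. f (c # u)) g w
     + vsr q (\<lambda>u. q powi (\<Sum>l\<leftarrow>u. pairing c l) * f u) (\<lambda>v. g (c # v)) w"

lemma PP0: "PP 0 = {([], [])}"
  by (auto simp: PP_def)

lemma vstar_cons: "vstar q f g (c # w) = vstar q (\<lambda>u. f (c # u)) g w
     + vstar q (\<lambda>u. q powi (\<Sum>l\<leftarrow>u. pairing c l) * f u) (\<lambda>v. g (c # v)) w"
proof -
  let ?n = "length w"
  let ?A = "{p \<in> PP (Suc ?n). fst p \<noteq> [] \<and> hd (fst p) = c}"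
  let ?B = "{p \<in> PP (Suc ?n). snd p \<noteq> [] \<and> hd (snd p) = c}"
  have "vstar q f g (c # w) = (\<Sum>p\<in>PP (Suc ?n). f (fst p) * g (snd p) *
      (case fst p of [] \<Rightarrow> 0 | a # u' \<Rightarrow> if a = c then shw q u' (snd p) w else 0))
    + (\<Sum>p\<in>PP (Suc ?n). f (fst p) * g (snd p) *
      (case snd p of [] \<Rightarrow> 0 | b # v' \<Rightarrow> if b = c then q powi (\<Sum>l\<leftarrow>fst p. pairing c l) * shw q (fst p) v' w else 0))"
    by (simp add: vstar_PP shw_cons sum.distrib algebra_simps)
  also have "(\<Sum>p\<in>PP (Suc ?n). f (fst p) * g (snd p) *
      (case fst p of [] \<Rightarrow> 0 | a # u' \<Rightarrow> if a = c then shw q u' (snd p) w else 0))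
    = (\<Sum>p\<in>PP ?n. f (c # fst p) * g (snd p) * shw q (fst p) (snd p) w)"
  proof -
    have "(\<Sum>p\<in>PP ?n. f (c # fst p) * g (snd p) * shw q (fst p) (snd p) w)
        = (\<Sum>p\<in>(\<lambda>p. (c # fst p, snd p)) ` PP ?n. f (fst p) * g (snd p) *
      (case fst p of [] \<Rightarrow> 0 | a # u' \<Rightarrow> if a = c then shw q u' (snd p) w else 0))"
      by (subst sum.reindex) (auto simp: inj_on_def)
    also have "\<dots> = (\<Sum>p\<in>PP (Suc ?n). f (fst p) * g (snd p) *
      (case fst p of [] \<Rightarrow> 0 | a # u' \<Rightarrow> if a = c then shw q u' (snd p) w else 0))"
    proof (rule sum.mono_neutral_left[OF finite_PP])
      show "(\<lambda>p. (c # fst p, snd p)) ` PP ?n \<subseteq> PP (Suc ?n)" by (auto simp: PP_def)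
      show "\<forall>i\<in>PP (Suc ?n) - (\<lambda>p. (c # fst p, snd p)) ` PP ?n. f (fst i) * g (snd i) *
      (case fst i of [] \<Rightarrow> 0 | a # u' \<Rightarrow> if a = c then shw q u' (snd i) w else 0) = 0"
      proof
        fix p assume p: "p \<in> PP (Suc ?n) - (\<lambda>p. (c # fst p, snd p)) ` PP ?n"
        obtain u v where pu: "p = (u, v)" by force
        show "f (fst p) * g (snd p) *
          (case fst p of [] \<Rightarrow> 0 | a # u' \<Rightarrow> if a = c then shw q u' (snd p) w else 0) = 0"
        proof (cases u)
          case Nil then show ?thesis using pu by simp
        next
          case (Cons a u')
          have "a \<noteq> c"
          proof
            assume "a = c"
            then have "p \<in> (\<lambda>p. (c # fst p, snd p)) ` PP ?n"
              using p pu Cons by (auto simp: PP_def image_iff)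
            then show False using p by blast
          qed
          then show ?thesis using pu Cons by simp
        qed
      qed
    qed
    finally show ?thesis by simp
  qed
  also have "(\<Sum>p\<in>PP (Suc ?n). f (fst p) * g (snd p) *
      (case snd p of [] \<Rightarrow> 0 | b # v' \<Rightarrow> if b = c then q powi (\<Sum>l\<leftarrow>fst p. pairing c l) * shw q (fst p) v' w else 0))
    = (\<Sum>p\<in>PP ?n. q powi (\<Sum>l\<leftarrow>fst p. pairing c l) * f (fst p) * g (c # snd p) * shw q (fst p) (snd p) w)"
  proof -
    have "(\<Sum>p\<in>PP ?n. q powi (\<Sum>l\<leftarrow>fst p. pairing c l) * f (fst p) * g (c # snd p) * shw q (fst p) (snd p) w)
        = (\<Sum>p\<in>(\<lambda>p. (fst p, c # snd p)) ` PP ?n. f (fst p) * g (snd p) *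
      (case snd p of [] \<Rightarrow> 0 | b # v' \<Rightarrow> if b = c then q powi (\<Sum>l\<leftarrow>fst p. pairing c l) * shw q (fst p) v' w else 0))"
      by (subst sum.reindex) (auto simp: inj_on_def algebra_simps)
    also have "\<dots> = (\<Sum>p\<in>PP (Suc ?n). f (fst p) * g (snd p) *
      (case snd p of [] \<Rightarrow> 0 | b # v' \<Rightarrow> if b = c then q powi (\<Sum>l\<leftarrow>fst p. pairing c l) * shw q (fst p) v' w else 0))"
    proof (rule sum.mono_neutral_left[OF finite_PP])
      show "(\<lambda>p. (fst p, c # snd p)) ` PP ?n \<subseteq> PP (Suc ?n)" by (auto simp: PP_def)
      show "\<forall>i\<in>PP (Suc ?n) - (\<lambda>p. (fst p, c # snd p)) ` PP ?n. f (fst i) * g (snd i) *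
      (case snd i of [] \<Rightarrow> 0 | b # v' \<Rightarrow> if b = c then q powi (\<Sum>l\<leftarrow>fst i. pairing c l) * shw q (fst i) v' w else 0) = 0"
      proof
        fix p assume p: "p \<in> PP (Suc ?n) - (\<lambda>p. (fst p, c # snd p)) ` PP ?n"
        obtain u v where pu: "p = (u, v)" by force
        show "f (fst p) * g (snd p) *
          (case snd p of [] \<Rightarrow> 0 | b # v' \<Rightarrow> if b = c then q powi (\<Sum>l\<leftarrow>fst p. pairing c l) * shw q (fst p) v' w else 0) = 0"
        proof (cases v)
          case Nil then show ?thesis using pu by simp
        next
          case (Cons b v')
          have "b \<noteq> c"
          proof
            assume "b = c"
            then have "p \<in> (\<lambda>p. (fst p, c # snd p)) ` PP ?n"
              using p pu Cons by (auto simp: PP_def image_iff)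
            then show False using p by blast
          qed
          then show ?thesis using pu Cons by simp
        qed
      qed
    qed
    finally show ?thesis by simp
  qed
  finally show ?thesis by (simp add: vstar_PP algebra_simps)
qed

lemma vstar_nil: "vstar q f g [] = f [] * g []"
  by (simp add: vstar_PP PP0 shw_nil)

lemma vstar_vsr: "vstar q f g w = vsr q f g w"
  by (induction w arbitrary: f g) (simp_all add: vstar_nil vstar_cons)


lemma vsr_zero_left: "vsr q (\<lambda>u. 0) g w = 0"
proof (induction w arbitrary: g)
  case Nil then show ?case by simp
next
  case (Cons c w) then show ?case by simp
qed

lemma vsr_zero_right: "vsr q f (\<lambda>u. 0) w = 0"
proof (induction w arbitrary: f)
  case Nil then show ?case by simp
next
  case (Cons c w) then show ?case by simp
qed

lemma vsr_sum_left: "finite S \<Longrightarrow> vsr q (\<lambda>u. \<Sum>l\<in>S. F l u) g w = (\<Sum>l\<in>S. vsr q (F l) g w)"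
proof (induction w arbitrary: F g)
  case Nil then show ?case by (simp add: sum_distrib_right)
next
  case (Cons c w)
  have e: "(\<lambda>u. q powi (\<Sum>l\<leftarrow>u. pairing c l) * (\<Sum>l\<in>S. F l u))
     = (\<lambda>u. \<Sum>l\<in>S. q powi (\<Sum>l\<leftarrow>u. pairing c l) * F l u)"
    by (simp add: sum_distrib_left)
  show ?case using Cons by (simp add: e sum.distrib)
qed

lemma vsr_sum_right: "finite S \<Longrightarrow> vsr q f (\<lambda>u. \<Sum>l\<in>S. G l u) w = (\<Sum>l\<in>S. vsr q f (G l) w)"
proof (induction w arbitrary: f G)
  case Nil then show ?case by (simp add: sum_distrib_left)
next
  case (Cons c w)
  show ?case using Cons by (simp add: sum.distrib)
qed

lemma vsr_scale_left: "vsr q (\<lambda>u. a * f u) g w = a * vsr q f g w"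
proof (induction w arbitrary: f g)
  case Nil then show ?case by simp
next
  case (Cons c w)
  have e: "(\<lambda>u. q powi (\<Sum>l\<leftarrow>u. pairing c l) * (a * f u))
     = (\<lambda>u. a * (q powi (\<Sum>l\<leftarrow>u. pairing c l) * f u))"
    by (simp add: algebra_simps)
  show ?case using Cons by (simp add: e algebra_simps)
qed

lemma vsr_scale_right: "vsr q f (\<lambda>u. a * g u) w = a * vsr q f g w"
proof (induction w arbitrary: f g)
  case Nil then show ?case by simp
next
  case (Cons c w)
  show ?case using Cons by (simp add: algebra_simps)
qed

lemma vsr_delta_left: "vsr q (\<lambda>u. if u = [] then a else 0) g w = a * g w"
proof (induction w arbitrary: g)
  case Nil then show ?case by simp
next
  case (Cons c w)
  have e: "(\<lambda>u. q powi (\<Sum>l\<leftarrow>u. pairing c l) * (if u = [] then a else 0))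
     = (\<lambda>u. if u = [] then a else 0)"
    by auto
  show ?case using Cons by (simp add: e vsr_zero_left)
qed

lemma vsr_delta_right: "vsr q f (\<lambda>u. if u = [] then a else 0) w = a * f w"
proof (induction w arbitrary: f)
  case Nil then show ?case by simp
next
  case (Cons c w)
  have e: "(\<lambda>u. if c # u = [] then a else 0) = (\<lambda>u. 0)" by auto
  show ?case using Cons by (simp add: e vsr_zero_right algebra_simps)
qed

definition hom :: "'a::field vv \<Rightarrow> 'a ls" where
  "hom f = (\<lambda>k w. if k = int (length w) then f w else 0)"

lemma hom_eqI: assumes "\<And>w. f w = g w" shows "hom f = hom g"
  using assms by (auto simp: hom_def fun_eq_iff)

lemma lsconst_hom: "lsconst c = hom (\<lambda>u. if u = [] then c else 0)"
  by (auto simp: lsconst_def hom_def fun_eq_iff)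

lemma zero_hom: "(\<lambda>_ _. 0) = hom (\<lambda>_. 0)"
  by (auto simp: hom_def fun_eq_iff)

lemma tsubst_scale_hom: "tsubst_scale c (hom f) = hom (\<lambda>u. c ^ length u * f u)"
  by (auto simp: tsubst_scale_def hom_def fun_eq_iff)

lemma vstar_zero_left: "vstar q (\<lambda>_. 0) g w = 0"
  by (simp add: vstar_def)

lemma vstar_zero_right: "vstar q f (\<lambda>_. 0) w = 0"
  by (simp add: vstar_def)

lemma lsmul_hom: "lsmul q (hom f) (hom g) = hom (vsr q f g)"
proof (rule ext, rule ext)
  fix k w
  let ?S = "{i. hom f i \<noteq> (\<lambda>_. 0) \<and> hom g (k - i) \<noteq> (\<lambda>_. 0)}"
  have sub: "?S \<subseteq> {0..k}"
  proof
    fix i assume "i \<in> ?S"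
    then obtain u v where "hom f i u \<noteq> 0" "hom g (k - i) v \<noteq> 0" by (auto simp: fun_eq_iff)
    then have "i = int (length u)" "k - i = int (length v)" by (auto simp: hom_def split: if_splits)
    then show "i \<in> {0..k}" by auto
  qed
  have "lsmul q (hom f) (hom g) k w = (\<Sum>i\<in>?S. vstar q (hom f i) (hom g (k - i)) w)"
    by (simp add: lsmul_def)
  also have "\<dots> = (\<Sum>i\<in>{0..k}. vstar q (hom f i) (hom g (k - i)) w)"
    by (rule sum.mono_neutral_left) (use sub in \<open>auto simp: vstar_zero_left vstar_zero_right\<close>)
  also have "\<dots> = (\<Sum>i\<in>{0..k}. \<Sum>p\<in>PP (length w). hom f i (fst p) * hom g (k - i) (snd p) * shw q (fst p) (snd p) w)"
    by (simp add: vstar_PP)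
  also have "\<dots> = (\<Sum>p\<in>PP (length w). \<Sum>i\<in>{0..k}. hom f i (fst p) * hom g (k - i) (snd p) * shw q (fst p) (snd p) w)"
    by (rule sum.swap)
  also have "\<dots> = (\<Sum>p\<in>PP (length w). if k = int (length w) then f (fst p) * g (snd p) * shw q (fst p) (snd p) w else 0)"
  proof (rule sum.cong[OF refl])
    fix p assume p: "p \<in> PP (length w)"
    have "(\<Sum>i\<in>{0..k}. hom f i (fst p) * hom g (k - i) (snd p) * shw q (fst p) (snd p) w)
      = (\<Sum>i\<in>{0..k}. if i = int (length (fst p)) then
           (if k - int (length (fst p)) = int (length (snd p)) then f (fst p) * g (snd p) * shw q (fst p) (snd p) w else 0) else 0)"
      by (rule sum.cong) (auto simp: hom_def)
    also have "\<dots> = (if k = int (length w) then f (fst p) * g (snd p) * shw q (fst p) (snd p) w else 0)"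
      using p by (auto simp: PP_def)
    finally show "(\<Sum>i\<in>{0..k}. hom f i (fst p) * hom g (k - i) (snd p) * shw q (fst p) (snd p) w)
      = (if k = int (length w) then f (fst p) * g (snd p) * shw q (fst p) (snd p) w else 0)" .
  qed
  also have "\<dots> = hom (vsr q f g) k w"
    by (simp add: hom_def vstar_PP[symmetric] vstar_vsr)
  finally show "lsmul q (hom f) (hom g) k w = hom (vsr q f g) k w" .
qed

lemma mmul_hom:
  assumes "\<And>i k. X i k = hom (A i k)" and "\<And>i k. Y i k = hom (B i k)"
  shows "mmul q n X Y i k = hom (\<lambda>w. \<Sum>l\<in>{1..n}. vsr q (A i l) (B l k) w)"
  unfolding mmul_def assms lsmul_hom
  unfolding hom_def by (auto simp: fun_eq_iff)


definition wt :: "letter list \<Rightarrow> int" where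
  "wt u = sum_list (map bar u)"

lemma wt_simps[simp]: "wt [] = 0" "wt (c # u) = bar c + wt u"
  by (simp_all add: wt_def)

lemma bar_simps[simp]: "bar Lx = 1" "bar Ly = -1"
  by (simp_all add: bar_def)

lemma pairing_bar: "pairing c l = 2 * bar c * bar l"
  by (cases c; cases l) (simp_all add: pairing_def)

lemma sum_pairing: "(\<Sum>l\<leftarrow>u. pairing c l) = 2 * bar c * wt u"
  by (induction u) (simp_all add: pairing_bar algebra_simps)

definition om :: "'a::field \<Rightarrow> int \<Rightarrow> 'a" where
  "om h n = h powi (- (n * (n - 1) div 2))"

fun Kw :: "('a::field \<Rightarrow> 'a) \<Rightarrow> 'a \<Rightarrow> 'a \<Rightarrow> int \<Rightarrow> 'a \<Rightarrow> int \<Rightarrow> int \<Rightarrow> letter list \<Rightarrow> 'a" where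
  "Kw sr q h n lam i k [] = (if i = k then h powi (2 * n * k - 2 * k * k) * om h n else 0)"
| "Kw sr q h n lam i k (c # u) = (if c = Lx
     then lam * h powi (4 * k - 2 * i - 1 - n) * sr (qint q (i + 1)) * sr (qint q (n - i)) * Kw sr q h n lam (i + 1) k u
     else lam * h powi (2 * i - 1 - 4 * k + n) * sr (qint q i) * sr (qint q (n + 1 - i)) * Kw sr q h n lam (i - 1) k u)"

lemma Kw_supp: "Kw sr q h n lam i k u \<noteq> 0 \<Longrightarrow> i + wt u = k"
proof (induction u arbitrary: i)
  case Nil then show ?case by (simp split: if_splits)
next
  case (Cons c u)
  show ?case
  proof (cases c)
    case Lx
    then have "Kw sr q h n lam (i + 1) k u \<noteq> 0" using Cons.prems by auto
    then show ?thesis using Cons.IH Lx by fastforce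
  next
    case Ly
    then have "Kw sr q h n lam (i - 1) k u \<noteq> 0" using Cons.prems by auto
    then show ?thesis using Cons.IH Ly by fastforce
  qed
qed

lemma Kw_twist: "(\<lambda>u. q powi (\<Sum>l\<leftarrow>u. pairing c l) * Kw sr q h n lam i k u)
   = (\<lambda>u. q powi (2 * bar c * (k - i)) * Kw sr q h n lam i k u)"
proof
  fix u
  show "q powi (\<Sum>l\<leftarrow>u. pairing c l) * Kw sr q h n lam i k u = q powi (2 * bar c * (k - i)) * Kw sr q h n lam i k u"
  proof (cases "Kw sr q h n lam i k u = 0")
    case False
    then have "i + wt u = k" by (rule Kw_supp)
    then have "wt u = k - i" by simp
    then show ?thesis by (simp add: sum_pairing)
  qed simp
qed

lemma hp_num_mult: "(x::'a::division_ring) powi (numeral c * n) = (x powi n) ^ numeral c"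
  by (simp add: power_int_mult[of x n "numeral c"] mult.commute)

lemma qid1: "(q::'a::field) \<noteq> 0 \<Longrightarrow> q * q \<noteq> 1 \<Longrightarrow> q powi (n + 1) + qint q n = q * qint q (n + 1)"
proof -
  assume q: "q \<noteq> 0" "q * q \<noteq> 1"
  have d: "q - inverse q \<noteq> 0"
  proof
    assume "q - inverse q = 0"
    then have "q * q = 1" using q by (simp add: field_simps)
    then show False using q by simp
  qed
  show ?thesis using q d
    by (simp add: qint_def power_int_add power_int_diff power_int_minus field_simps)
qed


lemma qint_1: "(q::'a::field) \<noteq> 0 \<Longrightarrow> q * q \<noteq> 1 \<Longrightarrow> qint q 1 = 1"
proof -
  assume q: "q \<noteq> 0" "q * q \<noteq> 1"
  have d: "q - inverse q \<noteq> 0"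
  proof
    assume "q - inverse q = 0"
    then have "q * q = 1" using q by (simp add: field_simps)
    then show False using q by simp
  qed
  then show ?thesis by (simp add: qint_def)
qed

lemma qint_0[simp]: "qint q 0 = 0"
  by (simp add: qint_def)

lemma sr0: "\<forall>z. sr z * sr z = (z::'a::field) \<Longrightarrow> sr 0 = 0"
  by (metis mult_zero_left no_zero_divisors)

definition Psi where
  "Psi sr q h m k1 k2 i1 i2 w = vsr q (Kw sr q h 1 (h powi m) i1 k1) (Kw sr q h m (h powi (-1)) i2 k2) w"

definition cxA where "cxA sr q h m k1 i1 = h powi m * h powi (4 * k1 - 2 * i1 - 1 - 1) * sr (qint q (i1 + 1)) * sr (qint q (1 - i1))"
definition cxB where "cxB sr q h m k1 k2 i1 i2 = q powi (2 * (k1 - i1)) * (h powi (-1) * h powi (4 * k2 - 2 * i2 - 1 - m) * sr (qint q (i2 + 1)) * sr (qint q (m - i2)))"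
definition cyA where "cyA sr q h m k1 i1 = h powi m * h powi (2 * i1 - 1 - 4 * k1 + 1) * sr (qint q i1) * sr (qint q (1 + 1 - i1))"
definition cyB where "cyB sr q h m k1 k2 i1 i2 = q powi (- (2 * (k1 - i1))) * (h powi (-1) * h powi (2 * i2 - 1 - 4 * k2 + m) * sr (qint q i2) * sr (qint q (m + 1 - i2)))"

lemma Psi_x: "Psi sr q h m k1 k2 i1 i2 (Lx # w) = cxA sr q h m k1 i1 * Psi sr q h m k1 k2 (i1 + 1) i2 w + cxB sr q h m k1 k2 i1 i2 * Psi sr q h m k1 k2 i1 (i2 + 1) w"
  unfolding Psi_def vsr.simps Kw_twist
  by (simp add: vsr_scale_left vsr_scale_right) (simp add: cxA_def cxB_def algebra_simps)

lemma Psi_y: "Psi sr q h m k1 k2 i1 i2 (Ly # w) = cyA sr q h m k1 i1 * Psi sr q h m k1 k2 (i1 - 1) i2 w + cyB sr q h m k1 k2 i1 i2 * Psi sr q h m k1 k2 i1 (i2 - 1) w"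
  unfolding Psi_def vsr.simps Kw_twist
  by (simp add: vsr_scale_left vsr_scale_right) (simp add: cyA_def cyB_def algebra_simps)

lemma Psi_nil: "Psi sr q h m k1 k2 i1 i2 [] = Kw sr q h 1 (h powi m) i1 k1 [] * Kw sr q h m (h powi (-1)) i2 k2 []"
  by (simp add: Psi_def)

definition E0 where "E0 sr q h m k2 I = sr (qint q (m + 1 - I)) * h powi (2 * k2 - m)"
definition E1 where "E1 sr q h m k2 I = sr (qint q I) * h powi (m - 2 * k2)"
definition EK where "EK sr q m k1 K = (if k1 = 0 then sr (qint q (m + 1 - K)) else sr (qint q K))"
definition X0 where "X0 sr q h m K I = h powi (4 * K - 2 * I - 1 - (m + 1)) * sr (qint q (I + 1)) * sr (qint q (m + 1 - I))"
definition Y0 where "Y0 sr q h m K I = h powi (2 * I - 1 - 4 * K + (m + 1)) * sr (qint q I) * sr (qint q (m + 1 + 1 - I))"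

lemma om_succ: "(h::'a::field) \<noteq> 0 \<Longrightarrow> om h (m + 1) = om h m * h powi (- m)"
proof -
  assume h: "h \<noteq> 0"
  have "(m + 1) * (m + 1 - 1) div 2 = m * (m - 1) div 2 + m"
  proof -
    have "(m + 1) * (m + 1 - 1) = m * (m - 1) + 2 * m" by (simp add: algebra_simps)
    then show ?thesis by simp
  qed
  then show ?thesis using h by (simp add: om_def power_int_add[symmetric] algebra_simps)
qed

locale qs =
  fixes sr :: "'a::field_char_0 \<Rightarrow> 'a" and q h :: 'a
  assumes h0: "h \<noteq> 0" and hq: "h * h = q" and sq: "\<forall>z. sr z * sr z = z" and q2: "q * q \<noteq> 1"
begin

lemma q0: "q \<noteq> 0" using h0 hq by auto

lemma qp: "q powi n = h powi n * h powi n"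
  using hq[symmetric] by (simp add: power_int_mult_distrib)

lemma sq2: "sr z * (sr z * r) = z * r"
  using sq by (metis mult.assoc)

lemma sq1: "sr z * sr z = z"
  using sq by simp

lemma s1: "sr (qint q 1) * sr (qint q 1) = 1" using sq qint_1[OF q0 q2] by simp

lemma idq: "qint q I = h * h * qint q (1 + I) - h powi I * h * (h powi I * h)"
proof -
  have "q powi (I + 1) + qint q I = q * qint q (I + 1)" by (rule qid1[OF q0 q2])
  then have "h powi I * h * (h powi I * h) + qint q I = h * h * qint q (I + 1)"
    by (simp add: qp power_int_add h0 hq)
  then show ?thesis by (simp add: add.commute eq_diff_eq)
qed

lemma idq2: "qint q (1 + m - I) = h * h * qint q (m + 2 - I) - h powi (1 + m - I) * h * (h powi (1 + m - I) * h)"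
proof -
  have e: "1 + (1 + m - I) = m + 2 - I" by simp
  show ?thesis using idq[of "1 + m - I"] by (simp only: e)
qed

lemma hpc1: "h powi a * h powi b = h powi (a + b)"
  by (simp add: power_int_add h0)

lemma hpc2: "h powi a * (h powi b * r) = h powi (a + b) * r"
  by (simp add: power_int_add h0)

lemma sc_x1: "E0 sr q h m k2 I * cxB sr q h m k1 k2 0 I = X0 sr q h m (k1 + k2) I * E0 sr q h m k2 (I + 1)"
  unfolding E0_def cxB_def X0_def
  apply (simp add: qp)
  apply (simp add: power_int_add power_int_diff power_int_minus hp_num_mult h0 s1)
  apply (simp add: field_simps h0 power2_eq_square)
  done

lemma sc_x2: "E0 sr q h m k2 I * cxA sr q h m k1 0 + E1 sr q h m k2 I * cxB sr q h m k1 k2 1 (I - 1)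
   = X0 sr q h m (k1 + k2) I * E1 sr q h m k2 (I + 1)"
  unfolding E0_def E1_def cxA_def cxB_def X0_def
  apply (simp add: qp)
  apply (simp add: power_int_add power_int_diff power_int_minus hp_num_mult h0 s1)
  apply (simp add: field_simps h0)
  apply (simp only: sq2)
  apply (subst idq[of I])
  by algebra

lemma sc_y1: "E0 sr q h m k2 I * cyB sr q h m k1 k2 0 I + E1 sr q h m k2 I * cyA sr q h m k1 1
   = Y0 sr q h m (k1 + k2) I * E0 sr q h m k2 (I - 1)"
  unfolding E0_def E1_def cyA_def cyB_def Y0_def
  apply (simp add: qp)
  apply (simp add: power_int_add power_int_diff power_int_minus hp_num_mult h0 s1)
  apply (simp add: field_simps h0)
  apply (simp only: sq2 sq1 qint_1[OF q0 q2])
  apply (subst idq2)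
  apply (simp add: power_int_add power_int_diff power_int_minus hp_num_mult h0)
  apply (simp add: field_simps h0)
  by algebra

lemma sc_y2: "E1 sr q h m k2 I * cyB sr q h m k1 k2 1 (I - 1) = Y0 sr q h m (k1 + k2) I * E1 sr q h m k2 (I - 1)"
  unfolding E1_def cyB_def Y0_def
  apply (simp add: qp)
  apply (simp add: power_int_add power_int_diff power_int_minus hp_num_mult h0 s1)
  apply (simp add: field_simps h0 power2_eq_square)
  by (simp add: power3_eq_cube power4_eq_xxxx)

lemma core_base:
  assumes k1: "k1 = 0 \<or> k1 = 1"
  shows "E0 sr q h m k2 I * Psi sr q h m k1 k2 0 I [] + E1 sr q h m k2 I * Psi sr q h m k1 k2 1 (I - 1) []
    = EK sr q m k1 (k1 + k2) * Kw sr q h (m + 1) 1 I (k1 + k2) []"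
proof -
  have om1: "om h 1 = 1" by (simp add: om_def)
  have oms: "om h (m + 1) = om h m * h powi (- m)" by (rule om_succ[OF h0])
  show ?thesis
  proof (cases "k1 = 0")
    case True
    show ?thesis
    proof (cases "I = k2")
      case True
      show ?thesis using \<open>k1 = 0\<close> True unfolding Psi_nil E0_def E1_def EK_def
        apply (simp add: om1 oms)
        apply (simp add: algebra_simps hpc1 hpc2)
        done
    next
      case False
      then show ?thesis using \<open>k1 = 0\<close> unfolding Psi_nil by simp
    qed
  next
    case False
    then have k11: "k1 = 1" using k1 by simp
    show ?thesis
    proof (cases "I = k2 + 1")
      case True
      show ?thesis using k11 True unfolding Psi_nil E0_def E1_def EK_def
        apply (simp add: om1 oms)
        apply (simp add: algebra_simps hpc1 hpc2)
        done
    next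
      case False
      then show ?thesis using k11 unfolding Psi_nil by simp
    qed
  qed
qed

lemma core:
  assumes k1: "k1 = 0 \<or> k1 = 1"
  shows "E0 sr q h m k2 I * Psi sr q h m k1 k2 0 I w + E1 sr q h m k2 I * Psi sr q h m k1 k2 1 (I - 1) w
    = EK sr q m k1 (k1 + k2) * Kw sr q h (m + 1) 1 I (k1 + k2) w"
proof (induction w arbitrary: I)
  case Nil
  show ?case by (rule core_base[OF k1])
next
  case (Cons c w)
  let ?P = "Psi sr q h m k1 k2"
  let ?K = "k1 + k2"
  let ?L = "Kw sr q h (m + 1) 1"
  show ?case
  proof (cases c)
    case Lx
    have a: "?P 0 I (Lx # w) = cxA sr q h m k1 0 * ?P 1 I w + cxB sr q h m k1 k2 0 I * ?P 0 (I + 1) w"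
      using Psi_x[of sr q h m k1 k2 0 I w] by simp
    have b: "?P 1 (I - 1) (Lx # w) = cxA sr q h m k1 1 * ?P 2 (I - 1) w + cxB sr q h m k1 k2 1 (I - 1) * ?P 1 I w"
      using Psi_x[of sr q h m k1 k2 1 "I - 1" w] by simp
    have c: "cxA sr q h m k1 1 = 0" by (simp add: cxA_def sr0[OF sq])
    have kx: "?L I ?K (Lx # w) = X0 sr q h m ?K I * ?L (I + 1) ?K w"
      by (simp add: X0_def algebra_simps)
    have IH: "E0 sr q h m k2 (I + 1) * ?P 0 (I + 1) w + E1 sr q h m k2 (I + 1) * ?P 1 I w
      = EK sr q m k1 ?K * ?L (I + 1) ?K w"
      using Cons.IH[of "I + 1"] by simp
    have "E0 sr q h m k2 I * ?P 0 I (Lx # w) + E1 sr q h m k2 I * ?P 1 (I - 1) (Lx # w)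
      = (E0 sr q h m k2 I * cxB sr q h m k1 k2 0 I) * ?P 0 (I + 1) w
        + (E0 sr q h m k2 I * cxA sr q h m k1 0 + E1 sr q h m k2 I * cxB sr q h m k1 k2 1 (I - 1)) * ?P 1 I w"
      unfolding a b c by (simp add: algebra_simps)
    also have "\<dots> = X0 sr q h m ?K I * (E0 sr q h m k2 (I + 1) * ?P 0 (I + 1) w + E1 sr q h m k2 (I + 1) * ?P 1 I w)"
      unfolding sc_x1 sc_x2 by (simp add: algebra_simps)
    also have "\<dots> = EK sr q m k1 ?K * ?L I ?K (Lx # w)"
      unfolding IH kx by (simp add: algebra_simps)
    finally show ?thesis using Lx by simp
  next
    case Ly
    have a: "?P 0 I (Ly # w) = cyA sr q h m k1 0 * ?P (-1) I w + cyB sr q h m k1 k2 0 I * ?P 0 (I - 1) w"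
      using Psi_y[of sr q h m k1 k2 0 I w] by simp
    have b: "?P 1 (I - 1) (Ly # w) = cyA sr q h m k1 1 * ?P 0 (I - 1) w + cyB sr q h m k1 k2 1 (I - 1) * ?P 1 (I - 1 - 1) w"
      using Psi_y[of sr q h m k1 k2 1 "I - 1" w] by simp
    have c: "cyA sr q h m k1 0 = 0" by (simp add: cyA_def sr0[OF sq])
    have ky: "?L I ?K (Ly # w) = Y0 sr q h m ?K I * ?L (I - 1) ?K w"
      by (simp add: Y0_def algebra_simps)
    have IH: "E0 sr q h m k2 (I - 1) * ?P 0 (I - 1) w + E1 sr q h m k2 (I - 1) * ?P 1 (I - 1 - 1) w
      = EK sr q m k1 ?K * ?L (I - 1) ?K w"
      using Cons.IH[of "I - 1"] by simp
    have "E0 sr q h m k2 I * ?P 0 I (Ly # w) + E1 sr q h m k2 I * ?P 1 (I - 1) (Ly # w)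
      = (E0 sr q h m k2 I * cyB sr q h m k1 k2 0 I + E1 sr q h m k2 I * cyA sr q h m k1 1) * ?P 0 (I - 1) w
        + (E1 sr q h m k2 I * cyB sr q h m k1 k2 1 (I - 1)) * ?P 1 (I - 1 - 1) w"
      unfolding a b c by (simp add: algebra_simps)
    also have "\<dots> = Y0 sr q h m ?K I * (E0 sr q h m k2 (I - 1) * ?P 0 (I - 1) w + E1 sr q h m k2 (I - 1) * ?P 1 (I - 1 - 1) w)"
      unfolding sc_y1 sc_y2 by (simp add: algebra_simps)
    also have "\<dots> = EK sr q m k1 ?K * ?L I ?K (Ly # w)"
      unfolding IH ky by (simp add: algebra_simps)
    finally show ?thesis using Ly by simp
  qed
qed

end


fun pw :: "'a::field \<Rightarrow> int \<Rightarrow> int \<Rightarrow> letter list \<Rightarrow> 'a" where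
  "pw q M s [] = 1"
| "pw q M s (c # u) = qint q (s + M * (bar c + 1) div 2) * pw q M (s + bar c) u"

lemma prod_pw: "(\<Prod>i<length w. qint q (s + sum_list (map bar (take i w)) + M * (bar (w ! i) + 1) div 2)) = pw q M s w"
proof (induction w arbitrary: s)
  case Nil then show ?case by simp
next
  case (Cons c w)
  have "(\<Prod>i<length (c # w). qint q (s + sum_list (map bar (take i (c # w))) + M * (bar ((c # w) ! i) + 1) div 2))
    = qint q (s + M * (bar c + 1) div 2) * (\<Prod>i<length w. qint q ((s + bar c) + sum_list (map bar (take i w)) + M * (bar (w ! i) + 1) div 2))"
    unfolding length_Cons prod.lessThan_Suc_shift by (simp add: algebra_simps)
  then show ?case using Cons by simp
qed

lemma pw_neg: "0 \<le> s \<Longrightarrow> i \<le> length w \<Longrightarrow> s + sum_list (map bar (take i w)) < 0 \<Longrightarrow> pw q M s w = 0"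
proof (induction w arbitrary: s i)
  case Nil then show ?case by simp
next
  case (Cons c w)
  show ?case
  proof (cases "c = Ly \<and> s = 0")
    case True then show ?thesis by simp
  next
    case False
    then have s1: "0 \<le> s + bar c" using Cons.prems(1) by (cases c) auto
    obtain i' where i: "i = Suc i'" using Cons.prems by (cases i) auto
    have "pw q M (s + bar c) w = 0"
      using Cons.IH[OF s1, of i'] Cons.prems i by (simp add: algebra_simps)
    then show ?thesis by simp
  qed
qed

lemma wt_def2: "wt w = sum_list (map bar w)" by (simp add: wt_def)

lemma Delta_n_pw: "Delta_n q M n w = (if length w = 2 * n \<and> wt w = 0 then pw q M 0 w else 0)"
proof (cases "length w = 2 * n")
  case True
  show ?thesis
  proof (cases "catalan w")
    case True
    then show ?thesis using \<open>length w = 2 * n\<close> prod_pw[of q 0 w M]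
      by (simp add: Delta_n_def catalan_def wt_def)
  next
    case False
    show ?thesis
    proof (cases "wt w = 0")
      case True
      then obtain i where "i \<le> length w" "sum_list (map bar (take i w)) < 0"
        using False by (auto simp: catalan_def wt_def not_le)
      then have "pw q M 0 w = 0" using pw_neg[of 0 i w q M] by simp
      then show ?thesis using False by (simp add: Delta_n_def)
    next
      case False
      then show ?thesis using \<open>\<not> catalan w\<close> by (simp add: Delta_n_def)
    qed
  qed
next
  case False
  then show ?thesis by (simp add: Delta_n_def)
qed

lemma wt_append[simp]: "wt (u @ v) = wt u + wt v" by (simp add: wt_def)

lemma pw_append: "pw q M s (u @ v) = pw q M s u * pw q M (s + wt u) v"
  by (induction u arbitrary: s) (simp_all add: algebra_simps)

lemma pw_rep_x: "pw q M s (replicate i Lx) = (\<Prod>t<i. qint q (s + int t + M))"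
  by (induction i arbitrary: s) (simp_all del: prod.lessThan_Suc add: prod.lessThan_Suc_shift algebra_simps)

lemma qfact_Suc: "qfact q (Suc k) = qfact q k * qint q (int (Suc k))"
  by (simp add: qfact_def)

lemma pw_rep_y: "pw q M (int k) (replicate k Ly) = qfact q k"
proof (induction k)
  case 0 then show ?case by (simp add: qfact_def)
next
  case (Suc k)
  have "pw q M (int (Suc k)) (replicate (Suc k) Ly) = qint q (int (Suc k)) * pw q M (int k) (replicate k Ly)"
    by simp
  then show ?case using Suc by (simp add: qfact_Suc)
qed

lemma wt_rep_x[simp]: "wt (replicate i Lx) = int i" by (induction i) auto
lemma wt_rep_y[simp]: "wt (replicate i Ly) = - int i" by (induction i) auto

lemma even_len_wt: "even (int (length v) + wt v)"
proof (induction v)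
  case Nil then show ?case by simp
next
  case (Cons c v)
  then show ?case by (cases c) (auto simp: algebra_simps)
qed


lemma even_nn1: "even ((n::int) * (n - 1))" by simp

definition Zr :: "int \<Rightarrow> int \<Rightarrow> int \<Rightarrow> int" where
  "Zr n i k = k * k + i * i - 4 * i * k + n * (i + k) - n * (n - 1) div 2"

lemma qpow_int: "2 * r = of_int z \<Longrightarrow> qpow h r = h powi z"
  by (simp add: qpow_def)

lemma rho_Zr: "2 * rho a b (of_nat n / 2) = of_int (Zr (int n) (int b - 1) (int n + 1 - int a))"
proof -
  have d: "of_int (int n * (int n - 1) div 2) = (of_int (int n * (int n - 1)) :: rat) / 2"
  proof -
    have "2 dvd int n * (int n - 1)" by (rule even_nn1)
    then obtain y where y: "int n * (int n - 1) = 2 * y" unfolding dvd_def by blast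
    show ?thesis unfolding y by simp
  qed
  show ?thesis unfolding Zr_def of_int_diff d rho_def
    apply (simp add: power2_eq_square)
    by algebra
qed

lemma qint_neg: "qint q (- t) = - qint q t"
  unfolding qint_def minus_divide_left minus_diff_eq by simp

locale qs2 = qs +
  assumes qnr: "\<forall>n::nat. n > 0 \<longrightarrow> q ^ n \<noteq> 1"
begin

lemma qint_nz_nat: "n > 0 \<Longrightarrow> qint q (int n) \<noteq> 0"
proof
  assume n: "n > 0" and z: "qint q (int n) = 0"
  have d: "q - inverse q \<noteq> 0"
  proof
    assume "q - inverse q = 0"
    then have "q * q = 1" using q0 by (simp add: field_simps)
    then show False using q2 by simp
  qed
  from z d have "q ^ n - inverse (q ^ n) = 0" by (simp add: qint_def power_int_minus)
  then have "q ^ n * q ^ n = 1" using q0 by (simp add: field_simps)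
  then have "q ^ (2 * n) = 1" by (simp add: power_mult_distrib[symmetric] mult_2 power_add)
  then show False using qnr n by auto
qed

lemma qint_nz: "t \<noteq> 0 \<Longrightarrow> qint q t \<noteq> 0"
proof (cases "t > 0")
  case True
  assume "t \<noteq> 0"
  then show ?thesis using qint_nz_nat[of "nat t"] True by simp
next
  case False
  assume t: "t \<noteq> 0"
  then have "qint q (- t) \<noteq> 0" using qint_nz_nat[of "nat (- t)"] False by simp
  then show ?thesis by (simp add: qint_neg)
qed

lemma sr_nz: "z \<noteq> 0 \<Longrightarrow> sr z \<noteq> 0"
  using sq by (metis mult_zero_left)

lemma srq_nz: "t \<noteq> 0 \<Longrightarrow> sr (qint q t) \<noteq> 0"
  using sr_nz qint_nz by blast

lemma sqfact_nz: "sqfact sr q n \<noteq> 0"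
  unfolding sqfact_def by (simp add: prod_zero_iff srq_nz)

end


lemma sqfact_Suc: "sqfact sr q (Suc j) = sqfact sr q j * sr (qint q (int (Suc j)))"
  by (simp add: sqfact_def)

lemma Zr_succ: "Zr n (i + 1) k = Zr n i k + 2 * i + 1 - 4 * k + n"
  by (simp add: Zr_def algebra_simps)

lemma qfact_split: "k \<le> n \<Longrightarrow> qfact q n = qfact q (n - k) * (\<Prod>t<k. qint q (int n - int t))"
proof (induction k)
  case 0 then show ?case by simp
next
  case (Suc k)
  then have "k \<le> n" by simp
  have "n - k = Suc (n - Suc k)" using Suc.prems by simp
  then have "qfact q (n - k) = qfact q (n - Suc k) * qint q (int n - int k)"
    using Suc.prems by (simp add: qfact_Suc of_nat_diff)
  then show ?case using Suc.IH[OF \<open>k \<le> n\<close>] by (simp add: algebra_simps)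
qed

context qs2
begin

lemma sqfact_sq: "sqfact sr q j * sqfact sr q j = qfact q j"
  by (induction j) (simp_all add: sqfact_def qfact_def, simp add: sqfact_Suc qfact_Suc sq2 algebra_simps)

lemma phi_ratio:
  assumes "i < n" "k \<le> n"
  shows "phi sr q h (n + 1 - k) (i + 1) n = h powi (4 * int k - 2 * int i - 1 - int n) * sr (qint q (int i + 1)) * sr (qint q (int n - int i)) * phi sr q h (n + 1 - k) (i + 2) n"
proof -
  have a1: "int n + 1 - int (n + 1 - k) = int k" using assms by simp
  have H1: "qpow h (rho (n + 1 - k) (i + 1) (of_nat n / 2)) = h powi (Zr (int n) (int i) (int k))"
    by (rule qpow_int) (use assms in \<open>simp add: rho_Zr of_nat_diff\<close>)
  have H2: "qpow h (rho (n + 1 - k) (i + 2) (of_nat n / 2)) = h powi (Zr (int n) (int i + 1) (int k))"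
    by (rule qpow_int) (use assms in \<open>simp add: rho_Zr of_nat_diff algebra_simps\<close>)
  have H12: "h powi (Zr (int n) (int i) (int k)) = h powi (4 * int k - 2 * int i - 1 - int n) * h powi (Zr (int n) (int i + 1) (int k))"
    unfolding Zr_succ by (simp add: power_int_add[symmetric] h0 algebra_simps)
  have e1: "n + 1 - k - 1 = n - k" "n + 1 - (i + 1) = n - i" "i + 1 - 1 = i" "n + 1 - (n + 1 - k) = k"
    "n + 1 - (i + 2) = n - i - 1" "i + 2 - 1 = Suc i"
    using assms by auto
  have s1: "sqfact sr q (n - i) = sqfact sr q (n - i - 1) * sr (qint q (int n - int i))"
  proof -
    have "n - i = Suc (n - i - 1)" using assms by simp
    then show ?thesis using assms by (metis sqfact_Suc of_nat_diff less_imp_le)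
  qed
  have s2: "sqfact sr q (Suc i) = sqfact sr q i * sr (qint q (int i + 1))"
    using sqfact_Suc[of sr q i] by (metis add.commute of_nat_Suc)
  have nz: "sr (qint q (int i + 1)) \<noteq> 0" by (rule srq_nz) simp
  show ?thesis
    unfolding phi_def H1 H2 e1 s1 s2 H12
    using nz sqfact_nz[of i] sqfact_nz[of k] by (simp add: field_simps)
qed

lemma qfact_nz: "qfact q j \<noteq> 0"
  unfolding qfact_def by (simp add: prod_zero_iff qint_nz)

lemma phi_base:
  assumes "k \<le> n"
  shows "phi sr q h (n + 1 - k) (k + 1) n * qfact q k * (\<Prod>t<k. qint q (int t - int n)) * (-1) ^ k
    = h powi (2 * int n * int k - 2 * int k * int k) * om h (int n)"
proof -
  have H: "qpow h (rho (n + 1 - k) (k + 1) (of_nat n / 2)) = h powi (Zr (int n) (int k) (int k))"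
    by (rule qpow_int) (use assms in \<open>simp add: rho_Zr of_nat_diff\<close>)
  have Z: "h powi (Zr (int n) (int k) (int k)) = h powi (2 * int n * int k - 2 * int k * int k) * om h (int n)"
    unfolding om_def Zr_def by (simp add: power_int_add[symmetric] h0 algebra_simps)
  have e1: "n + 1 - k - 1 = n - k" "n + 1 - (k + 1) = n - k" "k + 1 - 1 = k" "n + 1 - (n + 1 - k) = k"
    using assms by auto
  have P: "(\<Prod>t<k. qint q (int t - int n)) * (-1) ^ k = (\<Prod>t<k. qint q (int n - int t))"
  proof -
    have "(\<Prod>t<k. qint q (int n - int t)) = (\<Prod>t<k. (-1) * qint q (int t - int n))"
      by (rule prod.cong) (simp_all add: qint_neg[symmetric])
    also have "\<dots> = (-1) ^ k * (\<Prod>t<k. qint q (int t - int n))"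
      unfolding prod.distrib by simp
    finally show ?thesis by simp
  qed
  have F: "qfact q n = qfact q (n - k) * (\<Prod>t<k. qint q (int n - int t))"
    by (rule qfact_split[OF assms])
  have S1: "sqfact sr q (n - k) * sqfact sr q (n - k) = qfact q (n - k)" by (rule sqfact_sq)
  have S2: "sqfact sr q k * sqfact sr q k = qfact q k" by (rule sqfact_sq)
  have "phi sr q h (n + 1 - k) (k + 1) n * qfact q k * (\<Prod>t<k. qint q (int t - int n)) * (-1) ^ k
     = h powi (Zr (int n) (int k) (int k)) * inverse (qfact q n) * (qfact q (n - k) / qfact q k) * qfact q k
       * (\<Prod>t<k. qint q (int n - int t))"
    unfolding phi_def H e1 P[symmetric] by (simp add: S1 S2 mult.assoc)
  also have "\<dots> = h powi (Zr (int n) (int k) (int k))"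
    unfolding F using qfact_nz[of k] qfact_nz[of "n - k"] F qfact_nz[of n]
    by (simp add: field_simps)
  finally show ?thesis unfolding Z .
qed

lemma Kw_link:
  assumes "i \<le> n" "k \<le> n"
  shows "Kw sr q h (int n) 1 (int i) (int k) u = phi sr q h (n + 1 - k) (i + 1) n * qfact q k
     * (\<Prod>t<i. qint q (int t - int n)) * (-1) ^ ((length u + i + k) div 2)
     * (if int i + wt u = int k then pw q (- int n) (int i) u else 0)"
  using assms(1)
proof (induction u arbitrary: i)
  case Nil
  show ?case
  proof (cases "i = k")
    case True
    have "(k + k) div 2 = k" by simp
    then show ?thesis using True phi_base[OF assms(2)] by simp
  qed simp
next
  case (Cons c u)
  show ?case
  proof (cases c)
    case Lx
    show ?thesis
    proof (cases "i = n")
      case True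
      have d: "- (int n * 2) div 2 = - int n" by simp
      then show ?thesis using Lx True by (simp add: sr0[OF sq])
    next
      case False
      then have iln: "i < n" using Cons.prems by simp
      have IH: "Kw sr q h (int n) 1 (int i + 1) (int k) u = phi sr q h (n + 1 - k) (i + 2) n * qfact q k
         * ((\<Prod>t<i. qint q (int t - int n)) * qint q (int i - int n)) * (-1) ^ ((length u + Suc i + k) div 2)
         * (if int i + 1 + wt u = int k then pw q (- int n) (int i + 1) u else 0)"
        using Cons.IH[of "Suc i"] iln by (simp add: algebra_simps)
      have e: "(length (Lx # u) + i + k) div 2 = (length u + Suc i + k) div 2" by simp
      have d: "int i + - (int n * 2) div 2 = int i - int n" by simp
      show ?thesis
        unfolding Lx Kw.simps e phi_ratio[OF iln assms(2)] IH
        by (simp add: algebra_simps d)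
    qed
  next
    case Ly
    show ?thesis
    proof (cases i)
      case 0
      then show ?thesis using Ly by (simp add: sr0[OF sq])
    next
      case (Suc j)
      then have jln: "j < n" using Cons.prems by simp
      have IH: "Kw sr q h (int n) 1 (int j) (int k) u = phi sr q h (n + 1 - k) (j + 1) n * qfact q k
         * (\<Prod>t<j. qint q (int t - int n)) * (-1) ^ ((length u + j + k) div 2)
         * (if int j + wt u = int k then pw q (- int n) (int j) u else 0)"
        using Cons.IH[of j] jln by simp
      have e: "(length (Ly # u) + Suc j + k) div 2 = (length u + j + k) div 2 + 1" by simp
      have e2: "int (Suc j) - 1 = int j" by simp
      have hh: "h powi (2 * (int j + 1) - 1 - 4 * int k + int n) * h powi (4 * int k - 2 * int j - 1 - int n) = 1"
        by (simp add: hpc1)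
      have s1: "sr (qint q (int j + 1)) * sr (qint q (int j + 1)) = qint q (int j + 1)" by (rule sq1)
      have s2: "sr (qint q (int n - int j)) * sr (qint q (int n - int j)) = qint q (int n - int j)" by (rule sq1)
      have qn: "qint q (int j - int n) = - qint q (int n - int j)"
        using qint_neg[of q "int n - int j"] by simp
      have L: "Kw sr q h (int n) 1 (int (Suc j)) (int k) (Ly # u)
        = (h powi (2 * (int j + 1) - 1 - 4 * int k + int n) * h powi (4 * int k - 2 * int j - 1 - int n))
          * (sr (qint q (int j + 1)) * sr (qint q (int j + 1))) * (sr (qint q (int n - int j)) * sr (qint q (int n - int j)))
          * phi sr q h (n + 1 - k) (j + 2) n * qfact q k
         * (\<Prod>t<j. qint q (int t - int n)) * (-1) ^ ((length u + j + k) div 2)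
         * (if int j + wt u = int k then pw q (- int n) (int j) u else 0)"
        unfolding Kw.simps e2 IH phi_ratio[OF jln assms(2)]
        by (simp add: algebra_simps)
      show ?thesis
        unfolding Suc Ly L hh s1 s2 e
        by (simp add: qn algebra_simps)
    qed
  qed
qed

end


lemma del_x_pow: "(del_x_left ^^ j) f = (\<lambda>k w. f k (replicate j Lx @ w))"
  by (induction j) (simp_all add: del_x_left_def replicate_append_same[symmetric])

lemma del_y_pow: "(del_y_right ^^ j) f = (\<lambda>k w. f k (w @ replicate j Ly))"
proof (induction j)
  case 0 then show ?case by simp
next
  case (Suc j)
  have "(del_y_right ^^ Suc j) f = del_y_right ((del_y_right ^^ j) f)" by simp
  also have "\<dots> = (\<lambda>k w. f k (w @ replicate (Suc j) Ly))"
    unfolding Suc del_y_right_def by (simp add: replicate_append_same[symmetric])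
  finally show ?case .
qed

context qs2
begin

lemma Kmat_hom:
  assumes a: "1 \<le> a" "a \<le> n + 1" and b: "1 \<le> b" "b \<le> n + 1"
  shows "Kmat sr q h n a b = hom (Kw sr q h (int n) 1 (int b - 1) (int n + 1 - int a))"
proof (intro ext)
  fix d w
  define i where "i = b - 1"
  define k where "k = n + 1 - a"
  have ib: "int b - 1 = int i" and ka: "int n + 1 - int a = int k" and il: "i \<le> n" and kl: "k \<le> n"
    using a b by (auto simp: i_def k_def)
  define v where "v = replicate i Lx @ w @ replicate k Ly"
  have lv: "length v = i + length w + k" by (simp add: v_def)
  have wv: "wt v = int i + wt w - int k" by (simp add: v_def)
  have K: "Kmat sr q h n a b d w = phi sr q h a b n * tsubst_negsq (DeltaS q (- int n)) (d + int i + int k) v"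
    unfolding Kmat_def lsscale_def tshift_def del_x_pow del_y_pow
    using a b by (simp add: i_def k_def v_def of_nat_diff algebra_simps)
  have ab: "a = n + 1 - k" "b = i + 1" using a b by (auto simp: i_def k_def)
  show "Kmat sr q h n a b d w = hom (Kw sr q h (int n) 1 (int b - 1) (int n + 1 - int a)) d w"
  proof (cases "d = int (length w)")
    case True
    then have dj: "d + int i + int k = int (length v)" using lv by simp
    show ?thesis
    proof (cases "int i + wt w = int k")
      case True
      then have w0: "wt v = 0" using wv by simp
      have ev: "even (length v)" using even_len_wt[of v] w0 by simp
      then obtain r where r: "length v = 2 * r" by (auto elim!: evenE)
      have pv: "pw q (- int n) 0 v = (\<Prod>t<i. qint q (int t - int n)) * pw q (- int n) (int i) w * qfact q k"
        unfolding v_def pw_append pw_rep_x using True pw_rep_y[of q "- int n" k]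
        by (simp add: algebra_simps)
      have "(length w + i + k) div 2 = r" using r lv by simp
      then show ?thesis
        unfolding K dj hom_def ib ka
        using \<open>d = int (length w)\<close> r True w0 pv
        by (simp add: tsubst_negsq_def DeltaS_def Delta_n_pw Kw_link[OF il kl] ab algebra_simps)
    next
      case False
      then have "wt v \<noteq> 0" using wv by simp
      then show ?thesis
        unfolding K dj hom_def ib ka
        using \<open>d = int (length w)\<close> False
        by (simp add: tsubst_negsq_def DeltaS_def Delta_n_pw Kw_link[OF il kl])
    qed
  next
    case False
    then have neq: "d + int i + int k \<noteq> int (length v)" using lv by simp
    have "tsubst_negsq (DeltaS q (- int n)) (d + int i + int k) v = 0"
    proof (cases "even (d + int i + int k) \<and> 0 \<le> (d + int i + int k) div 2")
      case True
      then have "int (2 * nat ((d + int i + int k) div 2)) = d + int i + int k" by auto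
      then have "length v \<noteq> 2 * nat ((d + int i + int k) div 2)" using neq by auto
      then show ?thesis by (simp add: tsubst_negsq_def DeltaS_def Delta_n_pw)
    next
      case False
      then show ?thesis by (auto simp: tsubst_negsq_def DeltaS_def)
    qed
    then show ?thesis unfolding K hom_def using False by simp
  qed
qed

end


definition e0v where "e0v sr q m c = sr (qint q (int m + 2 - int c)) / sr (qint q (int m + 1))"
definition e1v where "e1v sr q m c = sr (qint q (int c - 1)) / sr (qint q (int m + 1))"
definition dnm where "dnm q m r = qint q (int m + 2 - int r) + qint q (int r - 1)"
definition f1v where "f1v sr q m r = sr (qint q (int m + 2 - int r)) * sr (qint q (int m + 1)) / dnm q m r"
definition f0v where "f0v sr q m r = sr (qint q (int r - 1)) * sr (qint q (int m + 1)) / dnm q m r"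

lemma sum_two_points:
  assumes "finite S" "a \<in> S" "b \<in> S" "a \<noteq> b"
    and "\<And>l. l \<in> S \<Longrightarrow> f l = (if l = a then x else 0) + (if l = b then y else 0)"
  shows "(\<Sum>l\<in>S. f l) = x + y"
proof -
  have "(\<Sum>l\<in>S. f l) = (\<Sum>l\<in>S. (if l = a then x else 0) + (if l = b then y else 0))"
    by (rule sum.cong) (simp_all add: assms(5))
  also have "\<dots> = x + y" using assms(1-3) by (simp add: sum.distrib)
  finally show ?thesis .
qed

lemma sum_E:
  fixes sr :: "'a::field \<Rightarrow> 'a"
  assumes m: "1 \<le> m" and c: "1 \<le> c" "c \<le> m + 2" and s0: "sr 0 = 0"
  shows "(\<Sum>l\<in>{1..2 * m + 2}. Emat sr q m l c * G l) = e0v sr q m c * G c + e1v sr q m c * G (c + m)"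
proof (rule sum_two_points)
  fix l assume l: "l \<in> {1..2 * m + 2}"
  show "Emat sr q m l c * G l = (if l = c then e0v sr q m c * G c else 0) + (if l = c + m then e1v sr q m c * G (c + m) else 0)"
  proof (cases "l = c")
    case True
    show ?thesis
    proof (cases "c \<le> m + 1")
      case True
      then show ?thesis using m c \<open>l = c\<close> by (auto simp: Emat_def e0v_def)
    next
      case False
      then have "c = m + 2" using c by simp
      then show ?thesis using m \<open>l = c\<close> by (auto simp: Emat_def e0v_def s0)
    qed
  next
    case False
    show ?thesis
    proof (cases "l = c + m")
      case True
      show ?thesis
      proof (cases "2 \<le> c")
        case True
        then show ?thesis using m c \<open>l = c + m\<close> False by (auto simp: Emat_def e1v_def of_nat_diff)
      next
        case F2: False
        then have "c = 1" using c by simp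
        then show ?thesis using m \<open>l = c + m\<close> False by (auto simp: Emat_def e1v_def s0)
      qed
    next
      case False
      then show ?thesis using \<open>l \<noteq> c\<close> m c l by (auto simp: Emat_def)
    qed
  qed
qed (use m c in auto)

lemma sum_F:
  fixes sr :: "'a::field \<Rightarrow> 'a"
  assumes m: "1 \<le> m" and r: "1 \<le> r" "r \<le> m + 2" and s0: "sr 0 = 0"
  shows "(\<Sum>l\<in>{1..2 * m + 2}. Fmat sr q m r l * G l) = f1v sr q m r * G r + f0v sr q m r * G (r + m)"
proof (rule sum_two_points)
  fix l assume l: "l \<in> {1..2 * m + 2}"
  show "Fmat sr q m r l * G l = (if l = r then f1v sr q m r * G r else 0) + (if l = r + m then f0v sr q m r * G (r + m) else 0)"
  proof (cases "l = r")
    case True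
    show ?thesis
    proof (cases "r \<le> m + 1")
      case True
      then show ?thesis using m r \<open>l = r\<close> by (auto simp: Fmat_def f1v_def dnm_def)
    next
      case False
      then have "r = m + 2" using r by simp
      then show ?thesis using m \<open>l = r\<close> by (auto simp: Fmat_def f1v_def s0)
    qed
  next
    case False
    show ?thesis
    proof (cases "l = r + m")
      case True
      show ?thesis
      proof (cases "2 \<le> r")
        case True
        then show ?thesis using m r \<open>l = r + m\<close> False
          by (auto simp: Fmat_def f0v_def dnm_def of_nat_diff Let_def algebra_simps)
      next
        case F2: False
        then have "r = 1" using r by simp
        then show ?thesis using m \<open>l = r + m\<close> False by (auto simp: Fmat_def f0v_def s0)
      qed
    next
      case False
      then show ?thesis using \<open>l \<noteq> r\<close> m r l by (auto simp: Fmat_def)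
    qed
  qed
qed (use m r in auto)

lemma sum_R_collapse:
  assumes N: "0 < (N::nat)" and l0: "l0 \<in> {1..2 * N}" and l2: "l2 \<in> {1..2 * N}"
  shows "(\<Sum>l\<in>{1..2 * N}. (if (l0 - 1) mod N = (l - 1) mod N \<and> (l - 1) div N = (l2 - 1) div N then Z l else 0))
    = Z ((l2 - 1) div N * N + (l0 - 1) mod N + 1)"
proof -
  let ?L = "(l2 - 1) div N * N + (l0 - 1) mod N + 1"
  have b: "(l2 - 1) div N \<le> 1"
  proof -
    have "l2 - 1 < 2 * N" using l2 by auto
    then have "(l2 - 1) div N < 2" by (rule less_mult_imp_div_less)
    then show ?thesis by simp
  qed
  have t: "(l0 - 1) mod N < N" using N by simp
  have Lin: "?L \<in> {1..2 * N}"
  proof -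
    have "(l2 - 1) div N * N \<le> N" using b by (metis mult_le_mono1 mult_1)
    then have "?L \<le> 2 * N" using t by linarith
    then show ?thesis by simp
  qed
  have iff: "\<And>l. l \<in> {1..2 * N} \<Longrightarrow> ((l0 - 1) mod N = (l - 1) mod N \<and> (l - 1) div N = (l2 - 1) div N) \<longleftrightarrow> l = ?L"
  proof -
    fix l assume l: "l \<in> {1..2 * N}"
    show "((l0 - 1) mod N = (l - 1) mod N \<and> (l - 1) div N = (l2 - 1) div N) \<longleftrightarrow> l = ?L"
    proof
      assume a: "(l0 - 1) mod N = (l - 1) mod N \<and> (l - 1) div N = (l2 - 1) div N"
      have "l - 1 = (l - 1) div N * N + (l - 1) mod N" by simp
      also have "\<dots> = (l2 - 1) div N * N + (l0 - 1) mod N" using a by simp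
      finally show "l = ?L" using l by (simp only: atLeastAtMost_iff) linarith
    next
      assume "l = ?L"
      then have "l - 1 = (l2 - 1) div N * N + (l0 - 1) mod N" by simp
      then show "(l0 - 1) mod N = (l - 1) mod N \<and> (l - 1) div N = (l2 - 1) div N"
        using t N by simp
    qed
  qed
  have "(\<Sum>l\<in>{1..2 * N}. (if (l0 - 1) mod N = (l - 1) mod N \<and> (l - 1) div N = (l2 - 1) div N then Z l else 0))
    = (\<Sum>l\<in>{1..2 * N}. (if l = ?L then Z l else 0))"
  proof (rule sum.cong[OF refl])
    fix l assume l: "l \<in> {1..2 * N}"
    show "(if (l0 - 1) mod N = (l - 1) mod N \<and> (l - 1) div N = (l2 - 1) div N then Z l else 0)
      = (if l = ?L then Z l else 0)" by (simp only: iff[OF l])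
  qed
  also have "\<dots> = Z ?L" using Lin by simp
  finally show ?thesis .
qed

lemma Kw_lam: "Kw sr q h n lam i k u = lam ^ length u * Kw sr q h n 1 i k u"
  by (induction u arbitrary: i) (simp_all add: algebra_simps)

lemma vsr_delta_right_fun: "vsr q f (\<lambda>u. if u = [] then a else 0) = (\<lambda>w. a * f w)"
  by (rule ext) (rule vsr_delta_right)
lemma vsr_delta_left_fun: "vsr q (\<lambda>u. if u = [] then a else 0) g = (\<lambda>w. a * g w)"
  by (rule ext) (rule vsr_delta_left)
lemma vsr_zero_right_fun: "vsr q f (\<lambda>u. 0) = (\<lambda>w. 0)"
  by (rule ext) (rule vsr_zero_right)
lemma vsr_zero_left_fun: "vsr q (\<lambda>u. 0) g = (\<lambda>w. 0)"
  by (rule ext) (rule vsr_zero_left)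

lemma hom_Kw_lam: "hom (\<lambda>u. lam ^ length u * Kw sr q h n 1 i k u) = hom (Kw sr q h n lam i k)"
  by (rule hom_eqI) (rule Kw_lam[symmetric])

lemma vsr_add_left: "vsr q (\<lambda>u. f u + g u) G w = vsr q f G w + vsr q g G w"
proof (induction w arbitrary: f g G)
  case Nil then show ?case by (simp add: algebra_simps)
next
  case (Cons c w)
  have e: "(\<lambda>u. q powi (\<Sum>l\<leftarrow>u. pairing c l) * (f u + g u))
     = (\<lambda>u. q powi (\<Sum>l\<leftarrow>u. pairing c l) * f u + q powi (\<Sum>l\<leftarrow>u. pairing c l) * g u)"
    by (simp add: algebra_simps)
  show ?case using Cons by (simp add: e)
qed

lemma mmul_homr:
  assumes "\<And>l. l \<in> {1..n} \<Longrightarrow> X i l = hom (A l)" and "\<And>l. l \<in> {1..n} \<Longrightarrow> Y l k = hom (B l)"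
  shows "mmul q n X Y i k = hom (\<lambda>w. \<Sum>l\<in>{1..n}. vsr q (A l) (B l) w)"
proof -
  have "mmul q n X Y i k = (\<lambda>d w. \<Sum>l\<in>{1..n}. lsmul q (hom (A l)) (hom (B l)) d w)"
    unfolding mmul_def using assms by (auto intro!: sum.cong)
  also have "\<dots> = hom (\<lambda>w. \<Sum>l\<in>{1..n}. vsr q (A l) (B l) w)"
    unfolding lsmul_hom unfolding hom_def by (auto simp: fun_eq_iff)
  finally show ?thesis .
qed

lemma qpow_half: "qpow h (of_nat m / 2) = h powi int m"
  by (rule qpow_int) simp

lemma qpow_mhalf: "qpow h (-1/2) = h powi (-1)"
  by (rule qpow_int) simp

lemma div_le1: "l \<in> {1..2 * m + 2} \<Longrightarrow> (l - 1) div (m + 1) \<le> (1::nat)"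
proof -
  assume "l \<in> {1..2 * m + 2}"
  then have "l - 1 < 2 * (m + 1)" by auto
  then have "(l - 1) div (m + 1) < 2" by (rule less_mult_imp_div_less)
  then show ?thesis by simp
qed

context qs2
begin

definition Aw where "Aw m l0 l = (\<lambda>u. (if (l0 - 1) mod (m + 1) = (l - 1) mod (m + 1) then 1 else 0)
   * Kw sr q h 1 (h powi int m) (int ((l - 1) div (m + 1))) (1 - int ((l0 - 1) div (m + 1))) u)"

definition Bw where "Bw m l l2 = (\<lambda>u. (if (l - 1) div (m + 1) = (l2 - 1) div (m + 1) then 1 else 0)
   * Kw sr q h (int m) (h powi (-1)) (int ((l2 - 1) mod (m + 1))) (int m - int ((l - 1) mod (m + 1))) u)"

lemma kron1_hom:
  assumes "l0 \<in> {1..2 * m + 2}" "l \<in> {1..2 * m + 2}"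
  shows "kron q (m + 1) (m + 1) (\<lambda>a b. tsubst_scale (qpow h (of_nat m / 2)) (Kmat sr q h 1 a b)) idm l0 l = hom (Aw m l0 l)"
proof -
  have a: "(l0 - 1) div (m + 1) \<le> 1" "(l - 1) div (m + 1) \<le> 1" using div_le1 assms by auto
  have K: "tsubst_scale (qpow h (of_nat m / 2)) (Kmat sr q h 1 ((l0 - 1) div (m + 1) + 1) ((l - 1) div (m + 1) + 1))
     = hom (Kw sr q h 1 (h powi int m) (int ((l - 1) div (m + 1))) (1 - int ((l0 - 1) div (m + 1))))"
    unfolding qpow_half using a
    by (simp add: Kmat_hom tsubst_scale_hom hom_Kw_lam)
  show ?thesis
  proof (cases "(l0 - 1) mod (m + 1) = (l - 1) mod (m + 1)")
    case True
    then show ?thesis unfolding kron_def K idm_def Aw_def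
      by (simp add: lsconst_hom lsmul_hom vsr_delta_right_fun)
  next
    case False
    then show ?thesis unfolding kron_def K idm_def Aw_def
      by (simp add: zero_hom lsmul_hom vsr_zero_right_fun)
  qed
qed

lemma kron2_hom:
  assumes "l \<in> {1..2 * m + 2}" "l2 \<in> {1..2 * m + 2}"
  shows "kron q (m + 1) (m + 1) idm (\<lambda>a b. tsubst_scale (qpow h (-1/2)) (Kmat sr q h m a b)) l l2 = hom (Bw m l l2)"
proof -
  have K: "tsubst_scale (qpow h (-1/2)) (Kmat sr q h m ((l - 1) mod (m + 1) + 1) ((l2 - 1) mod (m + 1) + 1))
     = hom (Kw sr q h (int m) (h powi (-1)) (int ((l2 - 1) mod (m + 1))) (int m - int ((l - 1) mod (m + 1))))"
    unfolding qpow_mhalf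
    by (simp add: Kmat_hom tsubst_scale_hom hom_Kw_lam)
  show ?thesis
  proof (cases "(l - 1) div (m + 1) = (l2 - 1) div (m + 1)")
    case True
    then show ?thesis unfolding kron_def K idm_def Bw_def
      by (simp add: lsconst_hom lsmul_hom vsr_delta_left_fun)
  next
    case False
    then show ?thesis unfolding kron_def K idm_def Bw_def
      by (simp add: zero_hom lsmul_hom vsr_zero_left_fun)
  qed
qed

end


lemma constmat_hom: "constmat M i k = hom (\<lambda>u. if u = [] then M i k else 0)"
  by (simp add: constmat_def lsconst_hom)

context qs2
begin

definition X1w where "X1w m r l = (\<lambda>w. f1v sr q m r * Aw m r l w + f0v sr q m r * Aw m (r + m) l w)"

lemma X1_hom:
  assumes m: "1 \<le> m" and r: "r \<in> {1..m + 2}" and l: "l \<in> {1..2 * m + 2}"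
  shows "mmul q (2 * m + 2) (constmat (Fmat sr q m))
    (kron q (m + 1) (m + 1) (\<lambda>a b. tsubst_scale (qpow h (of_nat m / 2)) (Kmat sr q h 1 a b)) idm) r l
    = hom (X1w m r l)"
proof -
  have "mmul q (2 * m + 2) (constmat (Fmat sr q m))
    (kron q (m + 1) (m + 1) (\<lambda>a b. tsubst_scale (qpow h (of_nat m / 2)) (Kmat sr q h 1 a b)) idm) r l
    = hom (\<lambda>w. \<Sum>l0\<in>{1..2 * m + 2}. vsr q (\<lambda>u. if u = [] then Fmat sr q m r l0 else 0) (Aw m l0 l) w)"
    apply (rule mmul_homr)
     apply (simp add: constmat_hom)
    apply (rule kron1_hom) apply assumption by (rule l)
  also have "\<dots> = hom (X1w m r l)"
  proof (rule hom_eqI)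
    fix w
    show "(\<Sum>l0\<in>{1..2 * m + 2}. vsr q (\<lambda>u. if u = [] then Fmat sr q m r l0 else 0) (Aw m l0 l) w) = X1w m r l w"
    proof -
      have r1: "1 \<le> r" "r \<le> m + 2" using r by auto
      show ?thesis
        unfolding vsr_delta_left X1w_def using sum_F[where sr = sr and q = q and G = "\<lambda>l0. Aw m l0 l w", OF m r1 sr0[OF sq]] by simp
    qed
  qed
  finally show ?thesis .
qed

definition Rv where "Rv m l = qpow h (2 * Dmat m l)"

lemma X2_hom:
  assumes m: "1 \<le> m" and r: "r \<in> {1..m + 2}" and l: "l \<in> {1..2 * m + 2}"
  shows "mmul q (2 * m + 2) (mmul q (2 * m + 2) (constmat (Fmat sr q m))
    (kron q (m + 1) (m + 1) (\<lambda>a b. tsubst_scale (qpow h (of_nat m / 2)) (Kmat sr q h 1 a b)) idm))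
    (constmat (Rmat h m)) r l
    = hom (\<lambda>w. Rv m l * X1w m r l w)"
proof -
  have "mmul q (2 * m + 2) (mmul q (2 * m + 2) (constmat (Fmat sr q m))
    (kron q (m + 1) (m + 1) (\<lambda>a b. tsubst_scale (qpow h (of_nat m / 2)) (Kmat sr q h 1 a b)) idm))
    (constmat (Rmat h m)) r l
    = hom (\<lambda>w. \<Sum>l'\<in>{1..2 * m + 2}. vsr q (X1w m r l') (\<lambda>u. if u = [] then Rmat h m l' l else 0) w)"
    apply (rule mmul_homr)
     apply (rule X1_hom[OF m r]) apply assumption
    by (simp add: constmat_hom)
  also have "\<dots> = hom (\<lambda>w. Rv m l * X1w m r l w)"
  proof (rule hom_eqI)
    fix w
    have "(\<Sum>l'\<in>{1..2 * m + 2}. vsr q (X1w m r l') (\<lambda>u. if u = [] then Rmat h m l' l else 0) w)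
      = (\<Sum>l'\<in>{1..2 * m + 2}. if l' = l then Rv m l * X1w m r l w else 0)"
      unfolding vsr_delta_right by (rule sum.cong) (auto simp: Rmat_def Rv_def)
    also have "\<dots> = Rv m l * X1w m r l w" using l by simp
    finally show "(\<Sum>l'\<in>{1..2 * m + 2}. vsr q (X1w m r l') (\<lambda>u. if u = [] then Rmat h m l' l else 0) w)
      = Rv m l * X1w m r l w" .
  qed
  finally show ?thesis .
qed

definition X3w where "X3w m r l2 = (\<lambda>w. \<Sum>l\<in>{1..2 * m + 2}. vsr q (\<lambda>u. Rv m l * X1w m r l u) (Bw m l l2) w)"

lemma X3_hom:
  assumes m: "1 \<le> m" and r: "r \<in> {1..m + 2}" and l2: "l2 \<in> {1..2 * m + 2}"
  shows "mmul q (2 * m + 2) (mmul q (2 * m + 2) (mmul q (2 * m + 2) (constmat (Fmat sr q m))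
    (kron q (m + 1) (m + 1) (\<lambda>a b. tsubst_scale (qpow h (of_nat m / 2)) (Kmat sr q h 1 a b)) idm))
    (constmat (Rmat h m)))
    (kron q (m + 1) (m + 1) idm (\<lambda>a b. tsubst_scale (qpow h (-1/2)) (Kmat sr q h m a b))) r l2
    = hom (X3w m r l2)"
  unfolding X3w_def
  apply (rule mmul_homr)
   apply (rule X2_hom[OF m r]) apply assumption
  apply (rule kron2_hom) apply assumption by (rule l2)

definition X4w where "X4w m r c = (\<lambda>w. e0v sr q m c * X3w m r c w + e1v sr q m c * X3w m r (c + m) w)"

lemma X4_hom:
  assumes m: "1 \<le> m" and r: "r \<in> {1..m + 2}" and c: "c \<in> {1..m + 2}"
  shows "mmul q (2 * m + 2) (mmul q (2 * m + 2) (mmul q (2 * m + 2) (mmul q (2 * m + 2) (constmat (Fmat sr q m))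
    (kron q (m + 1) (m + 1) (\<lambda>a b. tsubst_scale (qpow h (of_nat m / 2)) (Kmat sr q h 1 a b)) idm))
    (constmat (Rmat h m)))
    (kron q (m + 1) (m + 1) idm (\<lambda>a b. tsubst_scale (qpow h (-1/2)) (Kmat sr q h m a b))))
    (constmat (Emat sr q m)) r c
    = hom (X4w m r c)"
proof -
  have "mmul q (2 * m + 2) (mmul q (2 * m + 2) (mmul q (2 * m + 2) (mmul q (2 * m + 2) (constmat (Fmat sr q m))
    (kron q (m + 1) (m + 1) (\<lambda>a b. tsubst_scale (qpow h (of_nat m / 2)) (Kmat sr q h 1 a b)) idm))
    (constmat (Rmat h m)))
    (kron q (m + 1) (m + 1) idm (\<lambda>a b. tsubst_scale (qpow h (-1/2)) (Kmat sr q h m a b))))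
    (constmat (Emat sr q m)) r c
    = hom (\<lambda>w. \<Sum>l2\<in>{1..2 * m + 2}. vsr q (X3w m r l2) (\<lambda>u. if u = [] then Emat sr q m l2 c else 0) w)"
    apply (rule mmul_homr)
     apply (rule X3_hom[OF m r]) apply assumption
    by (simp add: constmat_hom)
  also have "\<dots> = hom (X4w m r c)"
  proof (rule hom_eqI)
    fix w
    show "(\<Sum>l2\<in>{1..2 * m + 2}. vsr q (X3w m r l2) (\<lambda>u. if u = [] then Emat sr q m l2 c else 0) w) = X4w m r c w"
    proof -
      have c1: "1 \<le> c" "c \<le> m + 2" using c by auto
      show ?thesis
        unfolding vsr_delta_right X4w_def using sum_E[where sr = sr and q = q and G = "\<lambda>l2. X3w m r l2 w", OF m c1 sr0[OF sq]]
        by (simp add: mult.commute)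
    qed
  qed
  finally show ?thesis .
qed

end


definition LL :: "nat \<Rightarrow> nat \<Rightarrow> nat \<Rightarrow> nat" where
  "LL m l0 l2 = (l2 - 1) div (m + 1) * (m + 1) + (l0 - 1) mod (m + 1) + 1"

context qs2
begin

definition Vw where "Vw m l0 l l2 = vsr q (Kw sr q h 1 (h powi int m) (int ((l - 1) div (m + 1))) (1 - int ((l0 - 1) div (m + 1))))
   (Kw sr q h (int m) (h powi (-1)) (int ((l2 - 1) mod (m + 1))) (int m - int ((l - 1) mod (m + 1))))"

lemma AwBw: "vsr q (Aw m l0 l) (Bw m l l2) w =
   (if (l0 - 1) mod (m + 1) = (l - 1) mod (m + 1) \<and> (l - 1) div (m + 1) = (l2 - 1) div (m + 1) then Vw m l0 l l2 w else 0)"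
  unfolding Aw_def Bw_def Vw_def by (simp add: vsr_scale_left vsr_scale_right)

lemma X3w_eval:
  assumes m: "1 \<le> m" and r: "r \<in> {1..m + 2}" and l2: "l2 \<in> {1..2 * m + 2}"
  shows "X3w m r l2 w = f1v sr q m r * (Rv m (LL m r l2) * Vw m r (LL m r l2) l2 w)
     + f0v sr q m r * (Rv m (LL m (r + m) l2) * Vw m (r + m) (LL m (r + m) l2) l2 w)"
proof -
  have N: "(0::nat) < m + 1" by simp
  have e2: "2 * (m + 1) = 2 * m + 2" by simp
  have r0: "r \<in> {1..2 * (m + 1)}" "r + m \<in> {1..2 * (m + 1)}" and l2': "l2 \<in> {1..2 * (m + 1)}" using r l2 by auto
  have "X3w m r l2 w = (\<Sum>l\<in>{1..2 * (m + 1)}. f1v sr q m r * (if (r - 1) mod (m + 1) = (l - 1) mod (m + 1) \<and> (l - 1) div (m + 1) = (l2 - 1) div (m + 1) then Rv m l * Vw m r l l2 w else 0)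
      + f0v sr q m r * (if (r + m - 1) mod (m + 1) = (l - 1) mod (m + 1) \<and> (l - 1) div (m + 1) = (l2 - 1) div (m + 1) then Rv m l * Vw m (r + m) l l2 w else 0))"
    unfolding X3w_def X1w_def e2
    by (rule sum.cong[OF refl]) (simp add: vsr_scale_left vsr_add_left AwBw algebra_simps)
  also have "\<dots> = f1v sr q m r * (\<Sum>l\<in>{1..2 * (m + 1)}. (if (r - 1) mod (m + 1) = (l - 1) mod (m + 1) \<and> (l - 1) div (m + 1) = (l2 - 1) div (m + 1) then Rv m l * Vw m r l l2 w else 0))
      + f0v sr q m r * (\<Sum>l\<in>{1..2 * (m + 1)}. (if (r + m - 1) mod (m + 1) = (l - 1) mod (m + 1) \<and> (l - 1) div (m + 1) = (l2 - 1) div (m + 1) then Rv m l * Vw m (r + m) l l2 w else 0))"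
    by (simp only: sum.distrib sum_distrib_left)
  also have "\<dots> = f1v sr q m r * (Rv m (LL m r l2) * Vw m r (LL m r l2) l2 w)
     + f0v sr q m r * (Rv m (LL m (r + m) l2) * Vw m (r + m) (LL m (r + m) l2) l2 w)"
    unfolding sum_R_collapse[OF N r0(1) l2'] sum_R_collapse[OF N r0(2) l2'] LL_def by simp
  finally show ?thesis .
qed

lemma Rv_eval:
  assumes "l \<in> {1..2 * m + 2}"
  shows "Rv m l = h powi ((if l \<le> m + 1 then 1 else -1) * (int m - 2 * int ((l - 1) mod (m + 1))))"
  unfolding Rv_def by (rule qpow_int) (simp add: Dmat_def of_nat_diff field_simps)

lemma qsum_nz:
  assumes ab: "0 < a + b"
  shows "qint q (int a) + qint q (int b) \<noteq> 0"
proof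
  assume z: "qint q (int a) + qint q (int b) = 0"
  have d: "q - inverse q \<noteq> 0"
  proof
    assume "q - inverse q = 0"
    then have "q * q = 1" using q0 by (simp add: field_simps)
    then show False using q2 by simp
  qed
  have qa: "q ^ a \<noteq> 0" "q ^ b \<noteq> 0" using q0 by auto
  from z d have "(q ^ a - inverse (q ^ a)) + (q ^ b - inverse (q ^ b)) = 0"
    by (simp add: qint_def power_int_minus add_divide_distrib[symmetric])
  then have "(q ^ a + q ^ b) * (q ^ a * q ^ b - 1) = 0"
    using qa by (simp add: field_simps)
  then consider "q ^ a * q ^ b = 1" | "q ^ a = -(q ^ b)" by (auto simp: eq_neg_iff_add_eq_0)
  then show False
  proof cases
    case 1
    then have "q ^ (a + b) = 1" by (simp add: power_add)
    then show False using qnr ab by auto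
  next
    case 2
    then have sq': "q ^ (2 * a) = q ^ (2 * b)" by (simp add: power_mult power2_eq_square mult.commute[of 2])
    show False
    proof (cases a b rule: linorder_cases)
      case less
      then have e: "2 * b = 2 * a + 2 * (b - a)" by simp
      have "q ^ (2 * b) = q ^ (2 * a) * q ^ (2 * (b - a))" by (subst e) (rule power_add)
      then have "q ^ (2 * (b - a)) = 1" using sq' q0 by simp
      then show False using qnr less by auto
    next
      case equal
      then have "q ^ a = 0" using 2 by simp
      then show False using qa by simp
    next
      case greater
      then have e: "2 * a = 2 * b + 2 * (a - b)" by simp
      have "q ^ (2 * a) = q ^ (2 * b) * q ^ (2 * (a - b))" by (subst e) (rule power_add)
      then have "q ^ (2 * (a - b)) = 1" using sq' q0 by simp
      then show False using qnr greater by auto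
    qed
  qed
qed

lemma dnm_nz: "1 \<le> r \<Longrightarrow> r \<le> m + 2 \<Longrightarrow> dnm q m r \<noteq> 0"
  using qsum_nz[of "m + 2 - r" "r - 1"] by (simp add: dnm_def of_nat_diff add.commute)

lemma FE:
  assumes r: "1 \<le> r" "r \<le> m + 2"
  shows "f1v sr q m r * sr (qint q (int m + 2 - int r)) + f0v sr q m r * sr (qint q (int r - 1)) = sr (qint q (int m + 1))"
  using dnm_nz[OF r] unfolding f1v_def f0v_def
  by (simp add: field_simps sq2 sq1) (simp add: dnm_def algebra_simps)

end


lemma dm1: "y < (N::nat) \<Longrightarrow> (N + y) div N = 1"
  by simp
lemma dm2: "y < (N::nat) \<Longrightarrow> (N + y) mod N = y"
  by simp

context qs2
begin

lemma T1:
  assumes r: "1 \<le> r" "r \<le> m + 1" and c: "1 \<le> c" "c \<le> m + 1"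
  shows "Rv m (LL m r c) * Vw m r (LL m r c) c w
    = h powi (2 * ((int m + 2 - int r) - 1) - int m) * Psi sr q h (int m) 1 ((int m + 2 - int r) - 1) 0 (int c - 1) w"
proof -
  have d: "(c - 1) div (m + 1) = 0" "(r - 1) div (m + 1) = 0" "(r - 1) mod (m + 1) = r - 1" "(c - 1) mod (m + 1) = c - 1"
    using r c by auto
  have L: "LL m r c = r" unfolding LL_def d using r by simp
  have R: "Rv m r = h powi (int m - 2 * int (r - 1))"
    using Rv_eval[of r m] r d by simp
  show ?thesis unfolding L R Vw_def Psi_def d using r c
    by (simp add: of_nat_diff algebra_simps)
qed

lemma T2:
  assumes r: "1 \<le> r" "r \<le> m + 1" and c: "2 \<le> c" "c \<le> m + 2"
  shows "Rv m (LL m r (c + m)) * Vw m r (LL m r (c + m)) (c + m) w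
    = h powi (int m - 2 * ((int m + 2 - int r) - 1)) * Psi sr q h (int m) 1 ((int m + 2 - int r) - 1) 1 (int c - 1 - 1) w"
proof -
  have e1: "c + m - 1 = (m + 1) + (c - 2)" using c by simp
  have d1: "(c + m - 1) div (m + 1) = 1" "(c + m - 1) mod (m + 1) = c - 2"
    unfolding e1 using c dm1[of "c - 2" "m + 1"] dm2[of "c - 2" "m + 1"] by simp_all
  have d: "(r - 1) div (m + 1) = 0" "(r - 1) mod (m + 1) = r - 1" using r by auto
  have L: "LL m r (c + m) = m + 1 + r" unfolding LL_def d1 d using r by simp
  have e2: "m + 1 + r - 1 = (m + 1) + (r - 1)" using r by simp
  have d2: "(m + 1 + r - 1) div (m + 1) = 1" "(m + 1 + r - 1) mod (m + 1) = r - 1"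
    unfolding e2 using r dm1[of "r - 2" "m + 1"] dm2[of "r - 2" "m + 1"] dm1[of "r - 1" "m + 1"] dm2[of "r - 1" "m + 1"] by simp_all
  have R: "Rv m (m + 1 + r) = h powi (- (int m - 2 * int (r - 1)))"
    using Rv_eval[of "m + 1 + r" m] r d2 by simp
  show ?thesis unfolding L R Vw_def Psi_def d1 d2 using r c
    by (simp add: of_nat_diff algebra_simps)
qed

lemma T3:
  assumes r: "2 \<le> r" "r \<le> m + 2" and c: "1 \<le> c" "c \<le> m + 1"
  shows "Rv m (LL m (r + m) c) * Vw m (r + m) (LL m (r + m) c) c w
    = h powi (2 * (int m + 2 - int r) - int m) * Psi sr q h (int m) 0 (int m + 2 - int r) 0 (int c - 1) w"
proof -
  have e1: "r + m - 1 = (m + 1) + (r - 2)" using r by simp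
  have d1: "(r + m - 1) div (m + 1) = 1" "(r + m - 1) mod (m + 1) = r - 2"
    unfolding e1 using r dm1[of "r - 2" "m + 1"] dm2[of "r - 2" "m + 1"] by simp_all
  have d: "(c - 1) div (m + 1) = 0" "(c - 1) mod (m + 1) = c - 1" using c by auto
  have L: "LL m (r + m) c = r - 1" unfolding LL_def d1 d using r by simp
  have d2: "(r - 1 - 1) div (m + 1) = 0" "(r - 1 - 1) mod (m + 1) = r - 2" using r by auto
  have R: "Rv m (r - 1) = h powi (int m - 2 * int (r - 2))"
  proof -
    have rr: "r - 1 \<in> {1..2 * m + 2}" "r - 1 \<le> m + 1" using r by auto
    show ?thesis using Rv_eval[OF rr(1)] rr(2) d2 by simp
  qed
  show ?thesis unfolding L R Vw_def Psi_def d1 d2 d using r c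
    by (simp add: of_nat_diff algebra_simps)
qed

lemma T4:
  assumes r: "2 \<le> r" "r \<le> m + 2" and c: "2 \<le> c" "c \<le> m + 2"
  shows "Rv m (LL m (r + m) (c + m)) * Vw m (r + m) (LL m (r + m) (c + m)) (c + m) w
    = h powi (int m - 2 * (int m + 2 - int r)) * Psi sr q h (int m) 0 (int m + 2 - int r) 1 (int c - 1 - 1) w"
proof -
  have e1: "r + m - 1 = (m + 1) + (r - 2)" using r by simp
  have d1: "(r + m - 1) div (m + 1) = 1" "(r + m - 1) mod (m + 1) = r - 2"
    unfolding e1 using r dm1[of "r - 2" "m + 1"] dm2[of "r - 2" "m + 1"] by simp_all
  have e3: "c + m - 1 = (m + 1) + (c - 2)" using c by simp
  have d3: "(c + m - 1) div (m + 1) = 1" "(c + m - 1) mod (m + 1) = c - 2"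
    unfolding e3 using c dm1[of "c - 2" "m + 1"] dm2[of "c - 2" "m + 1"] by simp_all
  have L: "LL m (r + m) (c + m) = m + r" unfolding LL_def d1 d3 using r by simp
  have e2: "m + r - 1 = (m + 1) + (r - 2)" using r by simp
  have d2: "(m + r - 1) div (m + 1) = 1" "(m + r - 1) mod (m + 1) = r - 2"
    unfolding e2 using r dm1[of "r - 2" "m + 1"] dm2[of "r - 2" "m + 1"] dm1[of "r - 1" "m + 1"] dm2[of "r - 1" "m + 1"] by simp_all
  have R: "Rv m (m + r) = h powi (- (int m - 2 * int (r - 2)))"
    using Rv_eval[of "m + r" m] r d2 by simp
  show ?thesis unfolding L R Vw_def Psi_def d1 d2 d3 using r c
    by (simp add: of_nat_diff algebra_simps)
qed

lemma final_word:
  assumes m: "1 \<le> m" and r: "r \<in> {1..m + 2}" and c: "c \<in> {1..m + 2}"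
  shows "X4w m r c w = Kw sr q h (int m + 1) 1 (int c - 1) (int m + 2 - int r) w"
proof -
  define I where "I = int c - 1"
  define K where "K = int m + 2 - int r"
  define s where "s = sr (qint q (int m + 1))"
  have s0: "s \<noteq> 0" unfolding s_def by (rule srq_nz) simp
  have r1: "1 \<le> r" "r \<le> m + 2" and c1: "1 \<le> c" "c \<le> m + 2" using r c by auto
  have cin: "c \<in> {1..2 * m + 2}" "c + m \<in> {1..2 * m + 2}" using c by auto
  have z0: "sr (qint q 0) = 0" by (simp add: sr0[OF sq])
  let ?P1 = "Psi sr q h (int m) 1 (K - 1) 0 I w"
  let ?P2 = "Psi sr q h (int m) 1 (K - 1) 1 (I - 1) w"
  let ?P3 = "Psi sr q h (int m) 0 K 0 I w"
  let ?P4 = "Psi sr q h (int m) 0 K 1 (I - 1) w"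
  let ?A1 = "Rv m (LL m r c) * Vw m r (LL m r c) c w"
  let ?A2 = "Rv m (LL m r (c + m)) * Vw m r (LL m r (c + m)) (c + m) w"
  let ?A3 = "Rv m (LL m (r + m) c) * Vw m (r + m) (LL m (r + m) c) c w"
  let ?A4 = "Rv m (LL m (r + m) (c + m)) * Vw m (r + m) (LL m (r + m) (c + m)) (c + m) w"
  have C1: "e0v sr q m c * (f1v sr q m r * ?A1) = f1v sr q m r * inverse s * (E0 sr q h (int m) (K - 1) I * ?P1)"
  proof (cases "r \<le> m + 1")
    case True
    show ?thesis
    proof (cases "c \<le> m + 1")
      case True
      show ?thesis unfolding T1[OF r1(1) \<open>r \<le> m + 1\<close> c1(1) True]
        unfolding e0v_def E0_def I_def K_def s_def using s0 unfolding s_def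
        by (simp add: field_simps)
    next
      case False
      then have "c = m + 2" using c1 by simp
      then show ?thesis unfolding e0v_def E0_def I_def by (simp add: z0 sr0[OF sq])
    qed
  next
    case False
    then have "r = m + 2" using r1 by simp
    then show ?thesis unfolding f1v_def by (simp add: z0 sr0[OF sq])
  qed
  have C2: "e1v sr q m c * (f1v sr q m r * ?A2) = f1v sr q m r * inverse s * (E1 sr q h (int m) (K - 1) I * ?P2)"
  proof (cases "r \<le> m + 1")
    case True
    show ?thesis
    proof (cases "2 \<le> c")
      case True
      show ?thesis unfolding T2[OF r1(1) \<open>r \<le> m + 1\<close> True c1(2)]
        unfolding e1v_def E1_def I_def K_def s_def using s0 unfolding s_def
        by (simp add: field_simps)
    next
      case False
      then have "c = 1" using c1 by simp
      then show ?thesis unfolding e1v_def E1_def I_def by (simp add: z0 sr0[OF sq])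
    qed
  next
    case False
    then have "r = m + 2" using r1 by simp
    then show ?thesis unfolding f1v_def by (simp add: z0 sr0[OF sq])
  qed
  have C3: "e0v sr q m c * (f0v sr q m r * ?A3) = f0v sr q m r * inverse s * (E0 sr q h (int m) K I * ?P3)"
  proof (cases "2 \<le> r")
    case True
    show ?thesis
    proof (cases "c \<le> m + 1")
      case True
      show ?thesis unfolding T3[OF \<open>2 \<le> r\<close> r1(2) c1(1) True]
        unfolding e0v_def E0_def I_def K_def s_def using s0 unfolding s_def
        by (simp add: field_simps)
    next
      case False
      then have "c = m + 2" using c1 by simp
      then show ?thesis unfolding e0v_def E0_def I_def by (simp add: z0 sr0[OF sq])
    qed
  next
    case False
    then have "r = 1" using r1 by simp
    then show ?thesis unfolding f0v_def by (simp add: z0 sr0[OF sq])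
  qed
  have C4: "e1v sr q m c * (f0v sr q m r * ?A4) = f0v sr q m r * inverse s * (E1 sr q h (int m) K I * ?P4)"
  proof (cases "2 \<le> r")
    case True
    show ?thesis
    proof (cases "2 \<le> c")
      case True
      show ?thesis unfolding T4[OF \<open>2 \<le> r\<close> r1(2) True c1(2)]
        unfolding e1v_def E1_def I_def K_def s_def using s0 unfolding s_def
        by (simp add: field_simps)
    next
      case False
      then have "c = 1" using c1 by simp
      then show ?thesis unfolding e1v_def E1_def I_def by (simp add: z0 sr0[OF sq])
    qed
  next
    case False
    then have "r = 1" using r1 by simp
    then show ?thesis unfolding f0v_def by (simp add: z0 sr0[OF sq])
  qed
  have core1: "E0 sr q h (int m) (K - 1) I * ?P1 + E1 sr q h (int m) (K - 1) I * ?P2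
     = sr (qint q K) * Kw sr q h (int m + 1) 1 I K w"
    using core[of 1 "int m" "K - 1" I w] by (simp add: EK_def)
  have core0: "E0 sr q h (int m) K I * ?P3 + E1 sr q h (int m) K I * ?P4
     = sr (qint q (int r - 1)) * Kw sr q h (int m + 1) 1 I K w"
    using core[of 0 "int m" K I w] by (simp add: EK_def K_def)
  have fe: "f1v sr q m r * sr (qint q K) + f0v sr q m r * sr (qint q (int r - 1)) = s"
    unfolding K_def s_def by (rule FE[OF r1])
  have "X4w m r c w = e0v sr q m c * (f1v sr q m r * ?A1) + e1v sr q m c * (f1v sr q m r * ?A2)
      + e0v sr q m c * (f0v sr q m r * ?A3) + e1v sr q m c * (f0v sr q m r * ?A4)"
    unfolding X4w_def X3w_eval[OF m r cin(1)] X3w_eval[OF m r cin(2)] by (simp add: algebra_simps)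
  also have "\<dots> = inverse s * (f1v sr q m r * (E0 sr q h (int m) (K - 1) I * ?P1 + E1 sr q h (int m) (K - 1) I * ?P2)
      + f0v sr q m r * (E0 sr q h (int m) K I * ?P3 + E1 sr q h (int m) K I * ?P4))"
    unfolding C1 C2 C3 C4 by (simp add: algebra_simps)
  also have "\<dots> = inverse s * (f1v sr q m r * sr (qint q K) + f0v sr q m r * sr (qint q (int r - 1))) * Kw sr q h (int m + 1) 1 I K w"
    unfolding core1 core0 by (simp add: algebra_simps)
  also have "\<dots> = Kw sr q h (int m + 1) 1 I K w"
    unfolding fe using s0 by simp
  finally show ?thesis unfolding I_def K_def .
qed

lemma main_mat:
  assumes m: "1 \<le> m" and r: "r \<in> {1..m + 2}" and c: "c \<in> {1..m + 2}"
  shows "Kmat sr q h (m + 1) r c =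
    mmul q (2 * m + 2)
      (mmul q (2 * m + 2)
        (mmul q (2 * m + 2)
          (mmul q (2 * m + 2)
            (constmat (Fmat sr q m))
            (kron q (m + 1) (m + 1) (\<lambda>a b. tsubst_scale (qpow h (of_nat m / 2)) (Kmat sr q h 1 a b)) idm))
          (constmat (Rmat h m)))
        (kron q (m + 1) (m + 1) idm (\<lambda>a b. tsubst_scale (qpow h (-1/2)) (Kmat sr q h m a b))))
      (constmat (Emat sr q m)) r c"
proof -
  have L: "Kmat sr q h (m + 1) r c = hom (Kw sr q h (int (m + 1)) 1 (int c - 1) (int (m + 1) + 1 - int r))"
    by (rule Kmat_hom) (use r c in auto)
  show ?thesis unfolding L X4_hom[OF m r c]
    by (rule hom_eqI) (simp add: final_word[OF m r c] algebra_simps)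
qed

end

theorem proposition6p9:
  fixes q h :: "'a::field_char_0" and sr :: "'a \<Rightarrow> 'a" and m :: nat
  assumes "q \<noteq> 0"
    and "\<forall>n::nat. n > 0 \<longrightarrow> q ^ n \<noteq> 1"
    and "h * h = q"
    and "\<forall>z. sr z * sr z = z"
    and "m \<ge> 1"
  shows "\<forall>r\<in>{1..m+2}. \<forall>c\<in>{1..m+2}.
    Kmat sr q h (m + 1) r c =
    mmul q (2 * m + 2)
      (mmul q (2 * m + 2)
        (mmul q (2 * m + 2)
          (mmul q (2 * m + 2)
            (constmat (Fmat sr q m))
            (kron q (m + 1) (m + 1) (\<lambda>a b. tsubst_scale (qpow h (of_nat m / 2)) (Kmat sr q h 1 a b)) idm))
          (constmat (Rmat h m)))
        (kron q (m + 1) (m + 1) idm (\<lambda>a b. tsubst_scale (qpow h (-1/2)) (Kmat sr q h m a b))))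
      (constmat (Emat sr q m)) r c"
proof -
  interpret qs2 sr q h
  proof unfold_locales
    show "h \<noteq> 0" using assms(1,3) by auto
    show "h * h = q" by (rule assms(3))
    show "\<forall>z. sr z * sr z = z" by (rule assms(4))
    show "q * q \<noteq> 1" using assms(2)[rule_format, of 2] by (simp add: power2_eq_square)
    show "\<forall>n::nat. n > 0 \<longrightarrow> q ^ n \<noteq> 1" by (rule assms(2))
  qed
  show ?thesis using main_mat[OF assms(5)] by blast
qed


end
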